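(* Fix $\alpha_0>d/2$, let $C_0=K_0+K_1(\alpha_0)$, and let $W\in\mathcal M^s$ with $s\ge\alpha_0$. If $4C_0^2\|W\|_{\alpha_0}\le1/2$, then $V=I+W$ is invertible in $\mathcal M^s$ and $$\|V^{-1}\|_s\le1+2K_1(s)\|W\|_s\ (s>\alpha_0),\qquad \|V^{-1}\|_{\alpha_0}\le2,\qquad \|V^{-1}-I\|_s\le2K_1(s)\|W\|_s.$$
   Context: Let $d\ge1$; $|\mathbf k|=\max_v|k_v|$, $\langle\mathbf k\rangle=\max\{1,|\mathbf k|\}$. $(\mathfrak B,\|\cdot\|_{\mathfrak B})$ is a Banach algebra of complex sequences indexed by $\mathbb Z^d$, pointwise operations, containing the constant sequence $1$ with norm $1$, translation invariant ($\|\sigma_{\mathbf j}a\|_{\mathfrak B}=\|a\|_{\mathfrak B}$, $(\sigma_{\mathbf j}a)_{\mathbf i}=a_{\mathbf i-\mathbf j}$). $\mathcal M$: matrices $A=(a_{\mathbf i,\mathbf j})$ with $\mathbf k$-diagonals $A_{\mathbf k}=(a_{\mathbf i,\mathbf i-\mathbf k})_{\mathbf i}\in\mathfrak B$; $\|A\|_s^2=\sum_{\mathbf k}\|A_{\mathbf k}\|_{\mathfrak B}^2\langle\mathbf k\rangle^{2s}$; $\mathcal M^s=\{A:\|A\|_s<\infty\}$; $I$ is the identity; products are matrix products. $K_0=\sqrt{20\sum_{\mathbf k}\langle\mathbf k\rangle^{-2\alpha_0}}$, $K_1(s)=(1-10^{-1/(2s)})^{-s}\sqrt{2\sum_{\mathbf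 k}\langle\mathbf k\rangle^{-2\alpha_0}}$. *)

theory Defs
  imports "HOL-Analysis.Analysis"
begin

type_synonym 'd idx = "int ^ 'd"
type_synonym 'd sq = "'d idx \<Rightarrow> complex"
type_synonym 'd mat = "'d idx \<Rightarrow> 'd idx \<Rightarrow> complex"

definition supnorm :: "'d::finite idx \<Rightarrow> int" where
  "supnorm k = Max (range (\<lambda>v. \<bar>k $ v\<bar>))"

definition jbr :: "'d::finite idx \<Rightarrow> real" where
  "jbr k = max 1 (real_of_int (supnorm k))"

definition shift :: "'d::finite idx \<Rightarrow> 'd sq \<Rightarrow> 'd sq" where
  "shift j a = (\<lambda>i. a (i - j))"

definition seq_banach_algebra :: "'d::finite sq set \<Rightarrow> ('d sq \<Rightarrow> real) \<Rightarrow> bool" where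
  "seq_banach_algebra B nB \<longleftrightarrow>
     (\<lambda>_. 0) \<in> B \<and>
     (\<forall>a\<in>B. \<forall>b\<in>B. (\<lambda>i. a i + b i) \<in> B) \<and>
     (\<forall>a\<in>B. \<forall>c. (\<lambda>i. c * a i) \<in> B) \<and>
     (\<forall>a\<in>B. \<forall>b\<in>B. (\<lambda>i. a i * b i) \<in> B) \<and>
     (\<lambda>_. 1) \<in> B \<and> nB (\<lambda>_. 1) = 1 \<and>
     (\<forall>a\<in>B. 0 \<le> nB a) \<and>
     (\<forall>a\<in>B. nB a = 0 \<longleftrightarrow> a = (\<lambda>_. 0)) \<and>
     (\<forall>a\<in>B. \<forall>c. nB (\<lambda>i. c * a i) = cmod c * nB a) \<and>
     (\<forall>a\<in>B. \<forall>b\<in>B. nB (\<lambda>i. a i + b i) \<le> nB a + nB b) \<and>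
     (\<forall>a\<in>B. \<forall>b\<in>B. nB (\<lambda>i. a i * b i) \<le> nB a * nB b) \<and>
     (\<forall>X::nat \<Rightarrow> 'd sq. (\<forall>n. X n \<in> B) \<and>
         (\<forall>e>0. \<exists>N. \<forall>m\<ge>N. \<forall>n\<ge>N. nB (\<lambda>i. X m i - X n i) < e)
       \<longrightarrow> (\<exists>L\<in>B. (\<lambda>n. nB (\<lambda>i. X n i - L i)) \<longlonglongrightarrow> 0)) \<and>
     (\<forall>a\<in>B. \<forall>j. shift j a \<in> B \<and> nB (shift j a) = nB a)"

definition diag :: "'d::finite mat \<Rightarrow> 'd idx \<Rightarrow> 'd sq" where
  "diag A k = (\<lambda>i. A i (i - k))"

definition snorm :: "('d::finite sq \<Rightarrow> real) \<Rightarrow> real \<Rightarrow> 'd mat \<Rightarrow> real" where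
  "snorm nB s A = sqrt (\<Sum>\<^sub>\<infinity>k. (nB (diag A k))\<^sup>2 * jbr k powr (2 * s))"

definition Ms :: "'d::finite sq set \<Rightarrow> ('d sq \<Rightarrow> real) \<Rightarrow> real \<Rightarrow> 'd mat set" where
  "Ms B nB s = {A. (\<forall>k. diag A k \<in> B) \<and>
      (\<lambda>k. (nB (diag A k))\<^sup>2 * jbr k powr (2 * s)) summable_on UNIV}"

definition Imat :: "'d::finite mat" where
  "Imat = (\<lambda>i j. if i = j then 1 else 0)"

definition madd :: "'d::finite mat \<Rightarrow> 'd mat \<Rightarrow> 'd mat" where
  "madd A B = (\<lambda>i j. A i j + B i j)"

definition mdiff :: "'d::finite mat \<Rightarrow> 'd mat \<Rightarrow> 'd mat" where
  "mdiff A B = (\<lambda>i j. A i j - B i j)"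

definition mmult :: "'d::finite mat \<Rightarrow> 'd mat \<Rightarrow> 'd mat" where
  "mmult A B = (\<lambda>i j. \<Sum>\<^sub>\<infinity>l. A i l * B l j)"

definition K0 :: "'d::finite itself \<Rightarrow> real \<Rightarrow> real" where
  "K0 _ \<alpha>0 = sqrt (20 * (\<Sum>\<^sub>\<infinity>k::'d idx. jbr k powr (-2 * \<alpha>0)))"

definition K1 :: "'d::finite itself \<Rightarrow> real \<Rightarrow> real \<Rightarrow> real" where
  "K1 _ \<alpha>0 s = (1 - 10 powr (-1 / (2 * s))) powr (-s)
       * sqrt (2 * (\<Sum>\<^sub>\<infinity>k::'d idx. jbr k powr (-2 * \<alpha>0)))"

end

theory Submission
  imports Defs
begin


locale sba =
  fixes B :: "'d::finite sq set" and nB :: "'d sq \<Rightarrow> real"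
  assumes BA: "seq_banach_algebra B nB"
begin

lemma zero_in: "(\<lambda>_. 0) \<in> B" using BA unfolding seq_banach_algebra_def by blast
lemma add_in: "a \<in> B \<Longrightarrow> b \<in> B \<Longrightarrow> (\<lambda>i. a i + b i) \<in> B"
  using BA unfolding seq_banach_algebra_def by blast
lemma scal_in: "a \<in> B \<Longrightarrow> (\<lambda>i. c * a i) \<in> B"
  using BA unfolding seq_banach_algebra_def by blast
lemma mult_in: "a \<in> B \<Longrightarrow> b \<in> B \<Longrightarrow> (\<lambda>i. a i * b i) \<in> B"
  using BA unfolding seq_banach_algebra_def by blast
lemma one_in: "(\<lambda>_. 1) \<in> B" using BA unfolding seq_banach_algebra_def by blast
lemma nB_one: "nB (\<lambda>_. 1) = 1" using BA unfolding seq_banach_algebra_def by blast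
lemma nB_nonneg: "a \<in> B \<Longrightarrow> 0 \<le> nB a" using BA unfolding seq_banach_algebra_def by blast
lemma nB_eq0: "a \<in> B \<Longrightarrow> nB a = 0 \<longleftrightarrow> a = (\<lambda>_. 0)"
  using BA unfolding seq_banach_algebra_def by blast
lemma nB_scal: "a \<in> B \<Longrightarrow> nB (\<lambda>i. c * a i) = cmod c * nB a"
  using BA unfolding seq_banach_algebra_def by blast
lemma nB_add: "a \<in> B \<Longrightarrow> b \<in> B \<Longrightarrow> nB (\<lambda>i. a i + b i) \<le> nB a + nB b"
  using BA unfolding seq_banach_algebra_def by blast
lemma nB_mult: "a \<in> B \<Longrightarrow> b \<in> B \<Longrightarrow> nB (\<lambda>i. a i * b i) \<le> nB a * nB b"
  using BA unfolding seq_banach_algebra_def by blast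
lemma complete:
  assumes "\<And>n. X n \<in> B"
    and "\<And>e. e>0 \<Longrightarrow> \<exists>N. \<forall>m\<ge>N. \<forall>n\<ge>N. nB (\<lambda>i. X m i - X n i) < e"
  shows "\<exists>L\<in>B. (\<lambda>n. nB (\<lambda>i. X n i - L i)) \<longlonglongrightarrow> 0"
proof -
  have "\<forall>X::nat \<Rightarrow> 'd sq. (\<forall>n. X n \<in> B) \<and>
         (\<forall>e>0. \<exists>N. \<forall>m\<ge>N. \<forall>n\<ge>N. nB (\<lambda>i. X m i - X n i) < e)
       \<longrightarrow> (\<exists>L\<in>B. (\<lambda>n. nB (\<lambda>i. X n i - L i)) \<longlonglongrightarrow> 0)"
    using BA unfolding seq_banach_algebra_def by blast
  then show ?thesis using assms by blast
qed
lemma shift_in: "a \<in> B \<Longrightarrow> shift j a \<in> B"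
  using BA unfolding seq_banach_algebra_def by blast
lemma nB_shift: "a \<in> B \<Longrightarrow> nB (shift j a) = nB a"
  using BA unfolding seq_banach_algebra_def by blast

lemma nB_zero: "nB (\<lambda>_. 0) = 0" using nB_eq0 zero_in by blast

lemma neg_in: "a \<in> B \<Longrightarrow> (\<lambda>i. - a i) \<in> B"
  using scal_in[of a "-1"] by simp
lemma diff_in: "a \<in> B \<Longrightarrow> b \<in> B \<Longrightarrow> (\<lambda>i. a i - b i) \<in> B"
  using add_in[OF _ neg_in, of a b] by simp
lemma nB_neg: "a \<in> B \<Longrightarrow> nB (\<lambda>i. - a i) = nB a"
  using nB_scal[of a "-1"] by simp
lemma nB_diff_sym: "a \<in> B \<Longrightarrow> b \<in> B \<Longrightarrow> nB (\<lambda>i. a i - b i) = nB (\<lambda>i. b i - a i)"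
  using nB_neg[OF diff_in[of a b]] by simp
lemma nB_diff: "a \<in> B \<Longrightarrow> b \<in> B \<Longrightarrow> nB (\<lambda>i. a i - b i) \<le> nB a + nB b"
  using nB_add[OF _ neg_in, of a b] nB_neg[of b] by simp

lemma sum_in:
  assumes "finite F" "\<And>k. k \<in> F \<Longrightarrow> f k \<in> B"
  shows "(\<lambda>i. \<Sum>k\<in>F. f k i) \<in> B \<and> nB (\<lambda>i. \<Sum>k\<in>F. f k i) \<le> (\<Sum>k\<in>F. nB (f k))"
  using assms
proof (induction F rule: finite_induct)
  case empty
  then show ?case using zero_in nB_zero by simp
next
  case (insert x F)
  then have h: "(\<lambda>i. \<Sum>k\<in>F. f k i) \<in> B" "nB (\<lambda>i. \<Sum>k\<in>F. f k i) \<le> (\<Sum>k\<in>F. nB (f k))"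
    "f x \<in> B" by auto
  have "(\<lambda>i. f x i + (\<lambda>i. \<Sum>k\<in>F. f k i) i) \<in> B" by (rule add_in[OF h(3) h(1)])
  moreover have "nB (\<lambda>i. f x i + (\<lambda>i. \<Sum>k\<in>F. f k i) i) \<le> nB (f x) + nB (\<lambda>i. \<Sum>k\<in>F. f k i)"
    by (rule nB_add[OF h(3) h(1)])
  ultimately show ?case using insert h by simp
qed

lemma pow_in:
  assumes "x \<in> B"
  shows "(\<lambda>i. x i ^ n) \<in> B \<and> nB (\<lambda>i. x i ^ n) \<le> nB x ^ n"
proof (induction n)
  case 0
  then show ?case using one_in nB_one by simp
next
  case (Suc n)
  then have h: "(\<lambda>i. x i ^ n) \<in> B" "nB (\<lambda>i. x i ^ n) \<le> nB x ^ n" by auto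
  have "(\<lambda>i. x i * (\<lambda>i. x i ^ n) i) \<in> B" by (rule mult_in[OF assms h(1)])
  moreover have "nB (\<lambda>i. x i * (\<lambda>i. x i ^ n) i) \<le> nB x * nB (\<lambda>i. x i ^ n)"
    by (rule nB_mult[OF assms h(1)])
  moreover have "nB x * nB (\<lambda>i. x i ^ n) \<le> nB x * nB x ^ n"
    using h(2) nB_nonneg[OF assms] by (simp add: mult_left_mono)
  ultimately show ?case by simp
qed

lemma G0:
  assumes f: "\<And>n. f n \<in> B" and sm: "(\<lambda>n. nB (f n)) summable_on UNIV"
  shows "\<exists>L\<in>B. (\<lambda>N. nB (\<lambda>i. (\<Sum>n<N. f n i) - L i)) \<longlonglongrightarrow> 0"
proof (rule complete)
  show "(\<lambda>i. \<Sum>n<N. f n i) \<in> B" for N using sum_in[of "{..<N}" f] f by auto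
  define P where "P N = (\<Sum>n<N. nB (f n))" for N
  have "(\<lambda>n. nB (f n)) sums (\<Sum>\<^sub>\<infinity>n. nB (f n))"
    by (rule has_sum_imp_sums[OF has_sum_infsum[OF sm]])
  then have "Cauchy P" unfolding sums_def P_def by (rule LIMSEQ_imp_Cauchy)
  have key: "nB (\<lambda>i. (\<Sum>k<m. f k i) - (\<Sum>k<n. f k i)) \<le> P m - P n" if "n \<le> m" for m n
  proof -
    have e1: "(\<lambda>i. (\<Sum>k<m. f k i) - (\<Sum>k<n. f k i)) = (\<lambda>i. \<Sum>k\<in>{n..<m}. f k i)"
    proof
      fix i
      have "(\<Sum>k<m. f k i) = (\<Sum>k<n. f k i) + (\<Sum>k\<in>{n..<m}. f k i)"
        using sum.atLeastLessThan_concat[of 0 n m "\<lambda>k. f k i"] that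
        by (simp add: lessThan_atLeast0)
      then show "(\<Sum>k<m. f k i) - (\<Sum>k<n. f k i) = (\<Sum>k\<in>{n..<m}. f k i)" by simp
    qed
    have e2: "P m - P n = (\<Sum>k\<in>{n..<m}. nB (f k))"
      using sum.atLeastLessThan_concat[of 0 n m "\<lambda>k. nB (f k)"] that
      by (simp add: lessThan_atLeast0 P_def)
    show ?thesis unfolding e1 e2 using sum_in[of "{n..<m}" f] f by auto
  qed
  fix e :: real assume "e > 0"
  then obtain N where N: "\<forall>m\<ge>N. \<forall>n\<ge>N. dist (P m) (P n) < e"
    using \<open>Cauchy P\<close> unfolding Cauchy_def by blast
  show "\<exists>N. \<forall>m\<ge>N. \<forall>n\<ge>N. nB (\<lambda>i. (\<Sum>n<m. f n i) - (\<Sum>na<n. f na i)) < e"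
  proof (intro exI allI impI)
    fix m n assume mn: "N \<le> m" "N \<le> n"
    show "nB (\<lambda>i. (\<Sum>n<m. f n i) - (\<Sum>na<n. f na i)) < e"
    proof (cases "n \<le> m")
      case True
      have "dist (P m) (P n) < e" using N mn by blast
      then show ?thesis using key[OF True] by (auto simp: dist_real_def)
    next
      case False
      have "dist (P n) (P m) < e" using N mn by blast
      then have "nB (\<lambda>i. (\<Sum>k<n. f k i) - (\<Sum>k<m. f k i)) < e"
        using key[of m n] False by (auto simp: dist_real_def)
      moreover have "nB (\<lambda>i. (\<Sum>k<n. f k i) - (\<Sum>k<m. f k i)) = nB (\<lambda>i. (\<Sum>k<m. f k i) - (\<Sum>k<n. f k i))"
        using nB_diff_sym[of "\<lambda>i. (\<Sum>k<n. f k i)" "\<lambda>i. (\<Sum>k<m. f k i)"] sum_in f by auto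
      ultimately show ?thesis by simp
    qed
  qed
qed

lemma geom_sum_mult: "(1 - z) * (\<Sum>n<N. z ^ n) = 1 - (z::complex) ^ N"
  by (rule one_diff_power_eq[symmetric])

lemma eval_le:
  assumes a: "a \<in> B"
  shows "cmod (a i) \<le> nB a"
proof (rule ccontr)
  assume "\<not> cmod (a i) \<le> nB a"
  then have lt: "nB a < cmod (a i)" by simp
  define c where "c = a i"
  have c0: "c \<noteq> 0" using lt nB_nonneg[OF a] c_def by auto
  define x where "x = (\<lambda>j. (1/c) * a j)"
  have xB: "x \<in> B" unfolding x_def by (rule scal_in[OF a])
  have nx: "nB x = nB a / cmod c" unfolding x_def using nB_scal[OF a, of "1/c"]
    by (simp add: norm_divide)
  have nx1: "nB x < 1" using nx lt c0 c_def by (simp add: divide_less_eq)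
  have nx0: "0 \<le> nB x" using nB_nonneg[OF xB] .
  have xi: "x i = 1" using c0 unfolding x_def c_def by simp
  define f where "f n = (\<lambda>j. x j ^ n)" for n
  have fB: "f n \<in> B" and fn: "nB (f n) \<le> nB x ^ n" for n
    using pow_in[OF xB, of n] unfolding f_def by auto
  have "(\<lambda>n. nB x ^ n) summable_on UNIV"
    by (rule summable_nonneg_imp_summable_on) (auto intro!: summable_geometric simp: nx0 nx1)
  then have sm: "(\<lambda>n. nB (f n)) summable_on UNIV"
    by (rule summable_on_comparison_test) (auto simp: fn nB_nonneg[OF fB])
  obtain L where LB: "L \<in> B" and Lt: "(\<lambda>N. nB (\<lambda>j. (\<Sum>n<N. f n j) - L j)) \<longlonglongrightarrow> 0"
    using G0[OF fB sm] by blast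
  define S where "S N = (\<lambda>j. \<Sum>n<N. x j ^ n)" for N
  have SB: "S N \<in> B" for N using sum_in[of "{..<N}" f] fB unfolding S_def f_def by auto
  have omx: "(\<lambda>j. 1 - x j) \<in> B" by (rule diff_in[OF one_in xB])
  define y where "y = (\<lambda>j. (1 - x j) * L j - 1)"
  have yB: "y \<in> B" unfolding y_def
    by (rule diff_in[OF mult_in[OF omx LB] one_in])
  have bound: "nB y \<le> nB (\<lambda>j. 1 - x j) * nB (\<lambda>j. (\<Sum>n<N. f n j) - L j) + nB x ^ N" for N
  proof -
    have LS: "(\<lambda>j. L j - S N j) \<in> B" by (rule diff_in[OF LB SB])
    have p1: "(\<lambda>j. (1 - x j) * (L j - S N j)) \<in> B" by (rule mult_in[OF omx LS])
    have p2: "(\<lambda>j. - (x j ^ N)) \<in> B" by (rule neg_in) (use pow_in[OF xB] in auto)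
    have ye: "y = (\<lambda>j. (1 - x j) * (L j - S N j) + - (x j ^ N))"
    proof
      fix j
      have "(1 - x j) * S N j = 1 - x j ^ N" unfolding S_def by (rule geom_sum_mult)
      then show "y j = (1 - x j) * (L j - S N j) + - (x j ^ N)"
        unfolding y_def by (simp add: algebra_simps)
    qed
    have "nB y \<le> nB (\<lambda>j. (1 - x j) * (L j - S N j)) + nB (\<lambda>j. - (x j ^ N))"
      unfolding ye by (rule nB_add[OF p1 p2])
    also have "nB (\<lambda>j. (1 - x j) * (L j - S N j)) \<le> nB (\<lambda>j. 1 - x j) * nB (\<lambda>j. L j - S N j)"
      by (rule nB_mult[OF omx LS])
    also have "nB (\<lambda>j. L j - S N j) = nB (\<lambda>j. (\<Sum>n<N. f n j) - L j)"
      using nB_diff_sym[OF LB SB] unfolding S_def f_def by simp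
    also have "nB (\<lambda>j. - (x j ^ N)) \<le> nB x ^ N"
      using nB_neg[of "\<lambda>j. x j ^ N"] pow_in[OF xB, of N] by simp
    finally show ?thesis by simp
  qed
  have "(\<lambda>N. nB (\<lambda>j. 1 - x j) * nB (\<lambda>j. (\<Sum>n<N. f n j) - L j) + nB x ^ N) \<longlonglongrightarrow> 0"
    using tendsto_add[OF tendsto_mult_right_zero[OF Lt] LIMSEQ_power_zero[of "nB x"]] nx0 nx1
    by simp
  then have "nB y \<le> 0" by (rule LIMSEQ_le_const) (use bound in auto)
  then have "y = (\<lambda>_. 0)" using nB_nonneg[OF yB] nB_eq0[OF yB] by simp
  then have "y i = 0" by simp
  then show False unfolding y_def xi by simp
qed

lemma sum_le_infsum_nonneg:
  fixes g :: "'a \<Rightarrow> real"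
  assumes "g summable_on UNIV" "\<And>x. 0 \<le> g x" "finite F"
  shows "sum g F \<le> infsum g UNIV"
proof -
  have "infsum g F \<le> infsum g UNIV"
    by (rule infsum_mono2) (use assms in auto)
  then show ?thesis using assms by simp
qed

lemma G_nat:
  fixes f :: "nat \<Rightarrow> 'd sq"
  assumes f: "\<And>n. f n \<in> B" and sm: "(\<lambda>n. nB (f n)) summable_on UNIV"
  shows "(\<lambda>i. \<Sum>\<^sub>\<infinity>n. f n i) \<in> B \<and> nB (\<lambda>i. \<Sum>\<^sub>\<infinity>n. f n i) \<le> (\<Sum>\<^sub>\<infinity>n. nB (f n))
         \<and> (\<forall>i. (\<lambda>n. f n i) summable_on UNIV)"
proof -
  obtain L where LB: "L \<in> B" and Lt: "(\<lambda>N. nB (\<lambda>j. (\<Sum>n<N. f n j) - L j)) \<longlonglongrightarrow> 0"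
    using G0[OF f sm] by blast
  define S where "S N = (\<lambda>j. \<Sum>n<N. f n j)" for N
  have SB: "S N \<in> B" and SN: "nB (S N) \<le> (\<Sum>n<N. nB (f n))" for N
    using sum_in[of "{..<N}" f] f unfolding S_def by auto
  have smr: "summable (\<lambda>n. nB (f n))"
    using sm summable_on_UNIV_nonneg_real_iff[of "\<lambda>n. nB (f n)"] by (simp add: nB_nonneg[OF f])
  have hs: "((\<lambda>n. f n i) has_sum L i) UNIV" for i
  proof -
    have "(\<lambda>N. S N i - L i) \<longlonglongrightarrow> 0"
    proof (rule Lim_null_comparison[OF _ Lt])
      show "\<forall>\<^sub>F N in sequentially. norm (S N i - L i) \<le> nB (\<lambda>j. (\<Sum>n<N. f n j) - L j)"
        by (intro always_eventually allI) (use eval_le[OF diff_in[OF SB LB]] in \<open>simp add: S_def\<close>)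
    qed
    then have "(\<lambda>N. (S N i - L i) + L i) \<longlonglongrightarrow> 0 + L i" by (intro tendsto_add) auto
    then have "(\<lambda>n. f n i) sums L i" unfolding sums_def S_def by simp
    moreover have "summable (\<lambda>n. norm (f n i))"
      by (rule summable_comparison_test'[OF smr]) (use eval_le[OF f] in auto)
    ultimately show ?thesis by (intro norm_summable_imp_has_sum) auto
  qed
  then have Leq: "(\<lambda>i. \<Sum>\<^sub>\<infinity>n. f n i) = L" by (auto intro!: infsumI)
  have "nB L \<le> nB (\<lambda>j. (\<Sum>n<N. f n j) - L j) + (\<Sum>\<^sub>\<infinity>n. nB (f n))" for N
  proof -
    have "nB L \<le> nB (\<lambda>j. L j - S N j) + nB (S N)"
      using nB_add[OF diff_in[OF LB SB[of N]] SB[of N]] by simp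
    also have "nB (\<lambda>j. L j - S N j) = nB (\<lambda>j. (\<Sum>n<N. f n j) - L j)"
      using nB_diff_sym[OF LB SB] unfolding S_def by simp
    also have "nB (S N) \<le> (\<Sum>\<^sub>\<infinity>n. nB (f n))"
      using SN[of N] sum_le_infsum_nonneg[OF sm nB_nonneg[OF f], of "{..<N}"] by simp
    finally show ?thesis by simp
  qed
  then have "nB L \<le> 0 + (\<Sum>\<^sub>\<infinity>n. nB (f n))"
    by (intro LIMSEQ_le_const[OF tendsto_add[OF Lt tendsto_const]]) auto
  moreover have "(\<lambda>n. f n i) summable_on UNIV" for i using hs[of i] by (rule has_sum_imp_summable)
  ultimately show ?thesis using Leq LB by simp
qed

lemma G_gen:
  assumes e: "bij_betw e (UNIV::nat set) (UNIV::'a set)"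
    and f: "\<And>k. f k \<in> B" and sm: "(\<lambda>k. nB (f k)) summable_on (UNIV::'a set)"
  shows "(\<lambda>i. \<Sum>\<^sub>\<infinity>k. f k i) \<in> B \<and> nB (\<lambda>i. \<Sum>\<^sub>\<infinity>k. f k i) \<le> (\<Sum>\<^sub>\<infinity>k. nB (f k))
         \<and> (\<forall>i. (\<lambda>k. f k i) summable_on UNIV)"
proof -
  have sm': "(\<lambda>n. nB (f (e n))) summable_on UNIV"
    using summable_on_reindex_bij_betw[OF e, of "\<lambda>k. nB (f k)"] sm by simp
  have r1: "(\<Sum>\<^sub>\<infinity>n. f (e n) i) = (\<Sum>\<^sub>\<infinity>k. f k i)" for i
    by (rule infsum_reindex_bij_betw[OF e])
  have r2: "(\<Sum>\<^sub>\<infinity>n. nB (f (e n))) = (\<Sum>\<^sub>\<infinity>k. nB (f k))"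
    by (rule infsum_reindex_bij_betw[OF e])
  have r3: "(\<lambda>n. f (e n) i) summable_on UNIV \<longleftrightarrow> (\<lambda>k. f k i) summable_on UNIV" for i
    by (rule summable_on_reindex_bij_betw[OF e])
  show ?thesis using G_nat[of "\<lambda>n. f (e n)", OF f sm'] r1 r2 r3 by simp
qed

end

lemma idx_bij: "\<exists>e. bij_betw e (UNIV::nat set) (UNIV::'d::finite idx set)"
proof -
  have inj: "inj (\<lambda>n::nat. (vec (int n) :: int^'d))"
    unfolding inj_def by (simp add: vec_eq_iff vec_def)
  have "infinite (range (\<lambda>n::nat. (vec (int n) :: int^'d)))"
    by (rule range_inj_infinite[OF inj])
  then have inf: "infinite (UNIV :: 'd idx set)"
    by (rule infinite_super[rotated]) simp
  have c: "countable (UNIV :: 'd idx set)" by simp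
  show ?thesis using bij_betw_from_nat_into[OF c inf] by auto
qed

lemma nat_bij: "\<exists>e. bij_betw e (UNIV::nat set) (UNIV::nat set)"
  using bij_betw_id by blast




lemma disc_lemma:
  fixes X P Q :: real
  assumes h: "\<And>t. t > 0 \<Longrightarrow> 2 * t * X \<le> t\<^sup>2 * P + Q"
    and X0: "0 \<le> X" and P0: "0 \<le> P" and Q0: "0 \<le> Q"
  shows "X\<^sup>2 \<le> P * Q"
proof (cases "X = 0")
  case True then show ?thesis using P0 Q0 by simp
next
  case False
  then have Xp: "X > 0" using X0 by simp
  show ?thesis
  proof (cases "P = 0")
    case True
    have "2 * ((Q + 1) / X) * X \<le> ((Q+1)/X)\<^sup>2 * P + Q" by (rule h) (use Xp Q0 in simp)
    then have "2 * (Q + 1) \<le> Q" using True Xp by simp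
    then show ?thesis using Q0 by simp
  next
    case False
    then have Pp: "P > 0" using P0 by simp
    have "2 * (X / P) * X \<le> (X / P)\<^sup>2 * P + Q" by (rule h) (use Xp Pp in simp)
    then have "2 * X\<^sup>2 / P \<le> X\<^sup>2 / P + Q" using Pp by (simp add: power2_eq_square field_simps)
    then have "X\<^sup>2 / P \<le> Q" by simp
    then show ?thesis using Pp by (simp add: divide_le_eq mult.commute)
  qed
qed

lemma CS_inf:
  fixes x y :: "'a \<Rightarrow> real"
  assumes x0: "\<And>k. 0 \<le> x k" and y0: "\<And>k. 0 \<le> y k"
    and xs: "(\<lambda>k. (x k)\<^sup>2) summable_on UNIV" and ys: "(\<lambda>k. (y k)\<^sup>2) summable_on UNIV"
  shows "(\<lambda>k. x k * y k) summable_on UNIV \<and>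
         (\<Sum>\<^sub>\<infinity>k. x k * y k)\<^sup>2 \<le> (\<Sum>\<^sub>\<infinity>k. (x k)\<^sup>2) * (\<Sum>\<^sub>\<infinity>k. (y k)\<^sup>2)"
proof -
  have xa: "(\<lambda>i. norm (x i * x i)) summable_on UNIV"
    using xs by (simp add: power2_eq_square summable_on_iff_abs_summable_on_real[symmetric])
  have ya: "(\<lambda>i. norm (y i * y i)) summable_on UNIV"
    using ys by (simp add: power2_eq_square summable_on_iff_abs_summable_on_real[symmetric])
  have xys: "(\<lambda>k. x k * y k) summable_on UNIV"
    by (rule abs_summable_summable[OF abs_summable_product[OF xa ya]])
  define X where "X = (\<Sum>\<^sub>\<infinity>k. x k * y k)"
  define P where "P = (\<Sum>\<^sub>\<infinity>k. (x k)\<^sup>2)"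
  define Q where "Q = (\<Sum>\<^sub>\<infinity>k. (y k)\<^sup>2)"
  have "2 * t * X \<le> t\<^sup>2 * P + Q" if t: "t > 0" for t
  proof -
    have "(\<Sum>\<^sub>\<infinity>k. 2 * t * (x k * y k)) \<le> (\<Sum>\<^sub>\<infinity>k. t\<^sup>2 * (x k)\<^sup>2 + (y k)\<^sup>2)"
    proof (rule infsum_mono)
      show "(\<lambda>k. 2 * t * (x k * y k)) summable_on UNIV" by (rule summable_on_cmult_right[OF xys])
      show "(\<lambda>k. t\<^sup>2 * (x k)\<^sup>2 + (y k)\<^sup>2) summable_on UNIV"
        by (rule summable_on_add[OF summable_on_cmult_right[OF xs] ys])
      fix k
      have "0 \<le> (t * x k - y k)\<^sup>2" by simp
      then show "2 * t * (x k * y k) \<le> t\<^sup>2 * (x k)\<^sup>2 + (y k)\<^sup>2"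
        by (simp add: power2_eq_square algebra_simps)
    qed
    also have "(\<Sum>\<^sub>\<infinity>k. t\<^sup>2 * (x k)\<^sup>2 + (y k)\<^sup>2) = t\<^sup>2 * P + Q"
      unfolding P_def Q_def
      by (simp add: infsum_add[OF summable_on_cmult_right[OF xs] ys] infsum_cmult_right')
    also have "(\<Sum>\<^sub>\<infinity>k. 2 * t * (x k * y k)) = 2 * t * X"
      unfolding X_def by (simp add: infsum_cmult_right')
    finally show ?thesis .
  qed
  moreover have "0 \<le> X" unfolding X_def by (rule infsum_nonneg) (simp add: x0 y0)
  moreover have "0 \<le> P" unfolding P_def by (rule infsum_nonneg) simp
  moreover have "0 \<le> Q" unfolding Q_def by (rule infsum_nonneg) simp
  ultimately have "X\<^sup>2 \<le> P * Q" by (intro disc_lemma) auto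
  then show ?thesis using xys unfolding X_def P_def Q_def by simp
qed

lemma sum_le_infsum_gen:
  fixes g :: "'a \<Rightarrow> real"
  assumes "g summable_on UNIV" "\<And>x. 0 \<le> g x" "finite F"
  shows "sum g F \<le> infsum g UNIV"
proof -
  have "infsum g F \<le> infsum g UNIV"
    by (rule infsum_mono2) (use assms in auto)
  then show ?thesis using assms by simp
qed

lemma term_le_infsum:
  fixes g :: "'a \<Rightarrow> real"
  assumes "g summable_on UNIV" "\<And>x. 0 \<le> g x"
  shows "g k \<le> infsum g UNIV"
  using sum_le_infsum_gen[OF assms, of "{k}"] by simp


lemma bij_minus_left: "bij_betw (\<lambda>m. m - k) UNIV (UNIV :: 'a::ab_group_add set)"
  by (rule bij_betw_byWitness[where f'="\<lambda>m. m + k"]) auto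

lemma bij_minus_right: "bij_betw (\<lambda>k. m - k) UNIV (UNIV :: 'a::ab_group_add set)"
  by (rule bij_betw_byWitness[where f'="\<lambda>k. m - k"]) auto

lemma young:
  fixes a g :: "'a::ab_group_add \<Rightarrow> real"
  assumes a0: "\<And>k. 0 \<le> a k" and g0: "\<And>k. 0 \<le> g k"
    and as: "a summable_on UNIV" and gs: "(\<lambda>k. (g k)\<^sup>2) summable_on UNIV"
  shows "(\<forall>m. (\<lambda>k. a k * g (m - k)) summable_on UNIV) \<and>
         (\<lambda>m. (\<Sum>\<^sub>\<infinity>k. a k * g (m - k))\<^sup>2) summable_on UNIV \<and>
         (\<Sum>\<^sub>\<infinity>m. (\<Sum>\<^sub>\<infinity>k. a k * g (m - k))\<^sup>2) \<le> (\<Sum>\<^sub>\<infinity>k. a k)\<^sup>2 * (\<Sum>\<^sub>\<infinity>k. (g k)\<^sup>2)"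
proof -
  define A where "A = (\<Sum>\<^sub>\<infinity>k. a k)"
  define G where "G = (\<Sum>\<^sub>\<infinity>k. (g k)\<^sup>2)"
  have A0: "0 \<le> A" unfolding A_def by (rule infsum_nonneg) (simp add: a0)
  have G0: "0 \<le> G" unfolding G_def by (rule infsum_nonneg) simp
  have gb: "(g j)\<^sup>2 \<le> G" for j unfolding G_def by (rule term_le_infsum[OF gs]) simp
  define h where "h m = (\<Sum>\<^sub>\<infinity>k. a k * (g (m - k))\<^sup>2)" for m
  have hs1: "(\<lambda>k. a k * (g (m - k))\<^sup>2) summable_on UNIV" for m
  proof (rule summable_on_comparison_test)
    show "(\<lambda>k. G * a k) summable_on UNIV" by (rule summable_on_cmult_right[OF as])
    show "a k * (g (m - k))\<^sup>2 \<le> G * a k" for k using gb[of "m-k"] a0[of k]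
      by (simp add: mult.commute[of G] mult_left_mono)
    show "0 \<le> a k * (g (m - k))\<^sup>2" for k using a0[of k] by simp
  qed
  have pw: "(\<lambda>k. a k * g (m - k)) summable_on UNIV \<and> (\<Sum>\<^sub>\<infinity>k. a k * g (m - k))\<^sup>2 \<le> A * h m" for m
  proof -
    have e1: "sqrt (a k) * (sqrt (a k) * g (m - k)) = a k * g (m - k)" for k
      using a0[of k] by (simp add: mult.assoc[symmetric])
    have e2: "(sqrt (a k))\<^sup>2 = a k" for k using a0[of k] by simp
    have e3: "(sqrt (a k) * g (m - k))\<^sup>2 = a k * (g (m - k))\<^sup>2" for k
      using a0[of k] by (simp add: power_mult_distrib)
    have "(\<lambda>k. sqrt (a k) * (sqrt (a k) * g (m - k))) summable_on UNIV \<and>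
         (\<Sum>\<^sub>\<infinity>k. sqrt (a k) * (sqrt (a k) * g (m - k)))\<^sup>2 \<le> (\<Sum>\<^sub>\<infinity>k. (sqrt (a k))\<^sup>2) * (\<Sum>\<^sub>\<infinity>k. (sqrt (a k) * g (m - k))\<^sup>2)"
      by (rule CS_inf) (use a0 g0 as hs1[of m] e2 e3 in auto)
    then show ?thesis unfolding e1 e2 e3 h_def A_def by simp
  qed
  define F where "F = (\<lambda>(k, m). a k * (g (m - k))\<^sup>2)"
  have inner: "((\<lambda>m. F (k, m)) has_sum (a k * G)) UNIV" for k
  proof -
    have "((\<lambda>m. (g (m - k))\<^sup>2) has_sum G) UNIV"
      using has_sum_reindex_bij_betw[OF bij_minus_left[of k], of "\<lambda>j. (g j)\<^sup>2" G]
        has_sum_infsum[OF gs] unfolding G_def by simp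
    then show ?thesis unfolding F_def by (simp add: has_sum_cmult_right)
  qed
  have Fs: "F summable_on Sigma UNIV (\<lambda>_. UNIV)"
  proof (rule summable_on_SigmaI[where g="\<lambda>k. a k * G"])
    show "((\<lambda>m. F (k, m)) has_sum a k * G) UNIV" for k by (rule inner)
    show "(\<lambda>k. a k * G) summable_on UNIV" by (rule summable_on_cmult_left[OF as])
    show "0 \<le> F (k, m)" for k m unfolding F_def using a0[of k] by simp
  qed
  then have Fs2: "(\<lambda>(k, m). a k * (g (m - k))\<^sup>2) summable_on UNIV \<times> UNIV" unfolding F_def by simp
  have swap: "(\<Sum>\<^sub>\<infinity>k. \<Sum>\<^sub>\<infinity>m. a k * (g (m - k))\<^sup>2) = (\<Sum>\<^sub>\<infinity>m. \<Sum>\<^sub>\<infinity>k. a k * (g (m - k))\<^sup>2)"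
    by (rule infsum_swap_banach[OF Fs2])
  have lhs: "(\<Sum>\<^sub>\<infinity>k. \<Sum>\<^sub>\<infinity>m. a k * (g (m - k))\<^sup>2) = A * G"
  proof -
    have "(\<Sum>\<^sub>\<infinity>m. a k * (g (m - k))\<^sup>2) = a k * G" for k
      using inner[of k] unfolding F_def by (simp add: infsumI)
    then show ?thesis unfolding A_def by (simp add: infsum_cmult_left')
  qed
  have hsum: "h summable_on UNIV"
  proof -
    have "(\<lambda>(m, k). a k * (g (m - k))\<^sup>2) summable_on UNIV \<times> UNIV"
      using Fs2 summable_on_swap[of "\<lambda>(k, m). a k * (g (m - k))\<^sup>2" UNIV UNIV] by simp
    then have "(\<lambda>m. \<Sum>\<^sub>\<infinity>k. (\<lambda>(m, k). a k * (g (m - k))\<^sup>2) (m, k)) summable_on UNIV"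
      using summable_on_SigmaD[of "\<lambda>(m, k). a k * (g (m - k))\<^sup>2" UNIV "\<lambda>_. UNIV"] hs1 by auto
    then show ?thesis unfolding h_def by simp
  qed
  have hval: "(\<Sum>\<^sub>\<infinity>m. h m) = A * G" using swap lhs unfolding h_def by simp
  have s2: "(\<lambda>m. (\<Sum>\<^sub>\<infinity>k. a k * g (m - k))\<^sup>2) summable_on UNIV"
    by (rule summable_on_comparison_test[OF summable_on_cmult_right[OF hsum, of A]]) (use pw in auto)
  have "(\<Sum>\<^sub>\<infinity>m. (\<Sum>\<^sub>\<infinity>k. a k * g (m - k))\<^sup>2) \<le> (\<Sum>\<^sub>\<infinity>m. A * h m)"
    by (rule infsum_mono[OF s2 summable_on_cmult_right[OF hsum]]) (use pw in auto)
  also have "\<dots> = A * (A * G)" using hval by (simp add: infsum_cmult_right')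
  finally show ?thesis using pw s2 unfolding A_def G_def by (simp add: power2_eq_square mult.assoc)
qed


lemma infsum_finsum:
  fixes f :: "'a \<Rightarrow> 'b \<Rightarrow> real"
  assumes "finite K" "\<And>k. k \<in> K \<Longrightarrow> (\<lambda>n. f n k) summable_on A"
  shows "(\<lambda>n. \<Sum>k\<in>K. f n k) summable_on A \<and> infsum (\<lambda>n. \<Sum>k\<in>K. f n k) A = (\<Sum>k\<in>K. infsum (\<lambda>n. f n k) A)"
  using assms
proof (induction K rule: finite_induct)
  case empty then show ?case by simp
next
  case (insert x F)
  then have h: "(\<lambda>n. \<Sum>k\<in>F. f n k) summable_on A" "infsum (\<lambda>n. \<Sum>k\<in>F. f n k) A = (\<Sum>k\<in>F. infsum (\<lambda>n. f n k) A)"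
    "(\<lambda>n. f n x) summable_on A" by auto
  show ?case using insert.hyps h summable_on_add[OF h(3) h(1)] infsum_add[OF h(3) h(1)] by simp
qed

lemma minkowski:
  fixes v :: "nat \<Rightarrow> 'a \<Rightarrow> real" and u w :: "'a \<Rightarrow> real"
  assumes v0: "\<And>n k. 0 \<le> v n k" and w0: "\<And>k. 0 \<le> w k" and u0: "\<And>k. 0 \<le> u k"
    and vs: "\<And>n. (\<lambda>k. (v n k)\<^sup>2 * w k) summable_on UNIV"
    and vk: "\<And>k. (\<lambda>n. v n k) summable_on UNIV"
    and Ns: "(\<lambda>n. sqrt (\<Sum>\<^sub>\<infinity>k. (v n k)\<^sup>2 * w k)) summable_on UNIV"
    and ule: "\<And>k. u k \<le> (\<Sum>\<^sub>\<infinity>n. v n k)"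
  shows "(\<lambda>k. (u k)\<^sup>2 * w k) summable_on UNIV \<and>
         sqrt (\<Sum>\<^sub>\<infinity>k. (u k)\<^sup>2 * w k) \<le> (\<Sum>\<^sub>\<infinity>n. sqrt (\<Sum>\<^sub>\<infinity>k. (v n k)\<^sup>2 * w k))"
proof -
  define N where "N n = sqrt (\<Sum>\<^sub>\<infinity>k. (v n k)\<^sup>2 * w k)" for n
  define M where "M = (\<Sum>\<^sub>\<infinity>n. N n)"
  have N0: "0 \<le> N n" for n unfolding N_def by (simp add: infsum_nonneg w0)
  have M0: "0 \<le> M" unfolding M_def by (rule infsum_nonneg) (simp add: N0)
  have fin: "(\<Sum>k\<in>K. (u k)\<^sup>2 * w k) \<le> M\<^sup>2" if K: "finite K" for K
  proof -
    define Z where "Z = (\<Sum>k\<in>K. (u k)\<^sup>2 * w k)"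
    have Z0: "0 \<le> Z" unfolding Z_def by (rule sum_nonneg) (simp add: w0)
    have "Z \<le> (\<Sum>k\<in>K. u k * w k * (\<Sum>\<^sub>\<infinity>n. v n k))"
      unfolding Z_def
    proof (rule sum_mono)
      fix k
      have "u k * w k * u k \<le> u k * w k * (\<Sum>\<^sub>\<infinity>n. v n k)"
        by (rule mult_left_mono[OF ule]) (simp add: u0 w0)
      then show "(u k)\<^sup>2 * w k \<le> u k * w k * (\<Sum>\<^sub>\<infinity>n. v n k)"
        by (simp add: power2_eq_square algebra_simps)
    qed
    also have "\<dots> = (\<Sum>k\<in>K. \<Sum>\<^sub>\<infinity>n. u k * w k * v n k)"
      by (simp add: infsum_cmult_right')
    also have "\<dots> = (\<Sum>\<^sub>\<infinity>n. \<Sum>k\<in>K. u k * w k * v n k)"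
      using infsum_finsum[OF K, of "\<lambda>n k. u k * w k * v n k" UNIV] summable_on_cmult_right[OF vk]
      by simp
    also have "\<dots> \<le> (\<Sum>\<^sub>\<infinity>n. N n * sqrt Z)"
    proof (rule infsum_mono)
      show "(\<lambda>n. \<Sum>k\<in>K. u k * w k * v n k) summable_on UNIV"
        using infsum_finsum[OF K, of "\<lambda>n k. u k * w k * v n k" UNIV] summable_on_cmult_right[OF vk]
        by simp
      show "(\<lambda>n. N n * sqrt Z) summable_on UNIV"
        using summable_on_cmult_left[OF Ns] unfolding N_def by simp
      fix n
      have cs: "(\<Sum>k\<in>K. (v n k * sqrt (w k)) * (u k * sqrt (w k)))\<^sup>2
            \<le> (\<Sum>k\<in>K. (v n k * sqrt (w k))\<^sup>2) * (\<Sum>k\<in>K. (u k * sqrt (w k))\<^sup>2)"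
        by (rule Cauchy_Schwarz_ineq_sum)
      have e1: "(v n k * sqrt (w k)) * (u k * sqrt (w k)) = u k * w k * v n k" for k
        using w0[of k] by (simp add: algebra_simps)
      have e2: "(v n k * sqrt (w k))\<^sup>2 = (v n k)\<^sup>2 * w k" for k
        using w0[of k] by (simp add: power_mult_distrib)
      have e3: "(u k * sqrt (w k))\<^sup>2 = (u k)\<^sup>2 * w k" for k
        using w0[of k] by (simp add: power_mult_distrib)
      have cs2: "(\<Sum>k\<in>K. u k * w k * v n k)\<^sup>2 \<le> (\<Sum>k\<in>K. (v n k)\<^sup>2 * w k) * Z"
        using cs unfolding e1 e2 e3 Z_def .
      have "(\<Sum>k\<in>K. (v n k)\<^sup>2 * w k) \<le> (\<Sum>\<^sub>\<infinity>k. (v n k)\<^sup>2 * w k)"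
        by (rule sum_le_infsum_gen[OF vs _ K]) (simp add: w0)
      then have "(\<Sum>k\<in>K. u k * w k * v n k)\<^sup>2 \<le> (N n)\<^sup>2 * Z"
        using cs2 Z0 unfolding N_def
        by (smt (verit, ccfv_SIG) infsum_nonneg mult_right_mono real_sqrt_pow2 vs w0 zero_le_mult_iff zero_le_power2)
      then have "\<bar>\<Sum>k\<in>K. u k * w k * v n k\<bar> \<le> N n * sqrt Z"
        using N0[of n] Z0 by (metis real_sqrt_abs real_sqrt_le_mono real_sqrt_mult real_sqrt_unique zero_le_power2 power2_abs)
      then show "(\<Sum>k\<in>K. u k * w k * v n k) \<le> N n * sqrt Z" by simp
    qed
    also have "\<dots> = M * sqrt Z" unfolding M_def by (simp add: infsum_cmult_left')
    finally have ZM: "Z \<le> M * sqrt Z" .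
    have "sqrt Z \<le> M"
    proof (cases "Z = 0")
      case True then show ?thesis using M0 by simp
    next
      case False
      then have sp: "sqrt Z > 0" using Z0 by simp
      have "sqrt Z * sqrt Z \<le> M * sqrt Z" using ZM Z0 by simp
      then show ?thesis using sp by (rule mult_right_le_imp_le)
    qed
    then have "(sqrt Z)\<^sup>2 \<le> M\<^sup>2" by (rule power_mono) (simp add: Z0)
    then show ?thesis using Z0 unfolding Z_def by simp
  qed
  have sm: "(\<lambda>k. (u k)\<^sup>2 * w k) summable_on UNIV"
  proof (rule nonneg_bdd_above_summable_on)
    show "0 \<le> (u k)\<^sup>2 * w k" for k by (simp add: w0)
    show "bdd_above (sum (\<lambda>k. (u k)\<^sup>2 * w k) ` {F. F \<subseteq> UNIV \<and> finite F})"
      using fin by (auto intro!: bdd_aboveI[of _ "M\<^sup>2"])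
  qed
  have "(\<Sum>\<^sub>\<infinity>k. (u k)\<^sup>2 * w k) \<le> M\<^sup>2"
    by (rule infsum_le_finite_sums[OF sm]) (use fin in auto)
  then have "sqrt (\<Sum>\<^sub>\<infinity>k. (u k)\<^sup>2 * w k) \<le> M" using M0 real_le_lsqrt real_sqrt_le_mono by fastforce
  then show ?thesis using sm unfolding M_def N_def by simp
qed




lemma abs_le_supnorm: "\<bar>k $ v\<bar> \<le> supnorm k"
  unfolding supnorm_def by (rule Max_ge) auto

lemma supnorm_nonneg: "0 \<le> supnorm k"
  using abs_le_supnorm[of k] abs_ge_zero order_trans by blast

lemma supnorm_triangle: "supnorm m \<le> supnorm k + supnorm (m - k)"
proof -
  have "\<bar>m $ v\<bar> \<le> supnorm k + supnorm (m - k)" for v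
  proof -
    have "m $ v = k $ v + (m - k) $ v" by simp
    then have "\<bar>m $ v\<bar> \<le> \<bar>k $ v\<bar> + \<bar>(m - k) $ v\<bar>" by linarith
    then show ?thesis using abs_le_supnorm[of k v] abs_le_supnorm[of "m-k" v] by linarith
  qed
  then show ?thesis unfolding supnorm_def[of m] by (subst Max_le_iff) auto
qed

lemma supnorm_zero: "supnorm (0 :: 'd::finite idx) = 0"
  unfolding supnorm_def by simp

lemma jbr_ge1: "1 \<le> jbr k" unfolding jbr_def by simp
lemma jbr_pos: "0 < jbr k" using jbr_ge1[of k] by simp
lemma jbr_zero: "jbr (0 :: 'd::finite idx) = 1" unfolding jbr_def by (simp add: supnorm_zero)

lemma jbr_triangle: "jbr m \<le> jbr k + jbr (m - k)"
proof -
  have "real_of_int (supnorm m) \<le> real_of_int (supnorm k) + real_of_int (supnorm (m - k))"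
    using supnorm_triangle[of m k] by linarith
  moreover have "0 \<le> real_of_int (supnorm k)" "0 \<le> real_of_int (supnorm (m - k))"
    using supnorm_nonneg by auto
  ultimately show ?thesis unfolding jbr_def max_def by auto
qed

lemma abs_le_jbr: "max 1 \<bar>real_of_int (k $ v)\<bar> \<le> jbr k"
proof -
  have "\<bar>real_of_int (k $ v)\<bar> \<le> real_of_int (supnorm k)"
    using abs_le_supnorm[of k v] by linarith
  then show ?thesis unfolding jbr_def max_def by auto
qed

lemma powr_split:
  fixes x y z s :: real
  assumes x: "0 < x" and y: "0 < y" and z: "0 < z" and xyz: "x \<le> y + z" and s: "0 < s"
  shows "x powr s \<le> sqrt 10 * z powr s + (1 - 10 powr (-1 / (2 * s))) powr (-s) * y powr s"
proof -
  define \<theta> where "\<theta> = 10 powr (-1 / (2 * s))"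
  have th0: "0 < \<theta>" unfolding \<theta>_def by simp
  have th1: "\<theta> < 1" unfolding \<theta>_def by (rule powr_less_one) (use s in auto)
  have ee: "(-1 / (2 * s)) * (-s) = 1/2" using s by (simp add: field_simps)
  have thp: "\<theta> powr (-s) = sqrt 10"
    unfolding \<theta>_def powr_powr ee by (rule powr_half_sqrt) simp
  show ?thesis
  proof (cases "\<theta> * x \<le> z")
    case True
    then have "x \<le> z / \<theta>" using th0 by (simp add: field_simps)
    then have "x powr s \<le> (z / \<theta>) powr s" using x s by (intro powr_mono2) auto
    also have "\<dots> = z powr s * \<theta> powr (-s)"
      unfolding powr_divide powr_minus_divide by simp
    also have "\<dots> = sqrt 10 * z powr s" using thp by simp
    finally have "x powr s \<le> sqrt 10 * z powr s" .
    moreover have "0 \<le> (1 - \<theta>) powr (-s) * y powr s" by simp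
    ultimately show ?thesis unfolding \<theta>_def by linarith
  next
    case False
    then have "(1 - \<theta>) * x \<le> y" using xyz by (simp add: algebra_simps)
    then have "x \<le> y / (1 - \<theta>)" using th1 by (simp add: field_simps)
    then have "x powr s \<le> (y / (1 - \<theta>)) powr s" using x s by (intro powr_mono2) auto
    also have "\<dots> = (1 - \<theta>) powr (-s) * y powr s"
      unfolding powr_divide powr_minus_divide by simp
    finally have "x powr s \<le> (1 - \<theta>) powr (-s) * y powr s" .
    moreover have "0 \<le> sqrt 10 * z powr s" by simp
    ultimately show ?thesis unfolding \<theta>_def by linarith
  qed
qed

lemma weight_split:
  assumes "0 < s"
  shows "jbr m powr s \<le> sqrt 10 * jbr (m - k) powr s + (1 - 10 powr (-1 / (2 * s))) powr (-s) * jbr k powr s"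
  by (rule powr_split[OF jbr_pos jbr_pos jbr_pos jbr_triangle assms])


lemma zeta_int_summable:
  fixes \<beta> :: real
  assumes b: "\<beta> > 1"
  shows "(\<lambda>j::int. (max 1 \<bar>real_of_int j\<bar>) powr (-\<beta>)) summable_on UNIV"
proof -
  define h where "h j = (max 1 \<bar>real_of_int j\<bar>) powr (-\<beta>)" for j :: int
  have "summable (\<lambda>n::nat. real n powr (-\<beta>))" using b by (simp add: summable_real_powr_iff)
  moreover have "eventually (\<lambda>n. h (int n) = real n powr (-\<beta>)) sequentially"
    using eventually_ge_at_top[of "1::nat"] by eventually_elim (simp add: h_def)
  ultimately have "summable (\<lambda>n::nat. h (int n))" using summable_cong[of "\<lambda>n. h (int n)" "\<lambda>n. real n powr (-\<beta>)"] by simp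
  then have s1: "(\<lambda>n::nat. h (int n)) summable_on UNIV"
    by (rule summable_nonneg_imp_summable_on) (simp add: h_def)
  have s2: "(\<lambda>n::nat. h (- int n)) summable_on UNIV" using s1 by (simp add: h_def)
  have r1: "h summable_on (range int)"
    using summable_on_reindex[of int UNIV h] s1 by (simp add: o_def)
  have r2: "h summable_on (range (\<lambda>n. - int n))"
    using summable_on_reindex[of "\<lambda>n. - int n" UNIV h] s2 by (simp add: o_def inj_on_def)
  have U: "range int \<union> range (\<lambda>n. - int n) = UNIV"
  proof -
    have "j \<in> range int \<union> range (\<lambda>n. - int n)" for j :: int
    proof (cases "j \<ge> 0")
      case True then have "j = int (nat j)" by simp
      then show ?thesis by blast
    next
      case False then have "j = - int (nat (-j))" by simp
      then show ?thesis by blast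
    qed
    then show ?thesis by blast
  qed
  have "h summable_on (range int \<union> range (\<lambda>n. - int n))" by (rule summable_on_union[OF r1 r2])
  then show ?thesis unfolding U h_def .
qed

lemma S_summable:
  assumes a0: "\<alpha>0 > real CARD('d::finite) / 2"
  shows "(\<lambda>k::'d idx. jbr k powr (-2 * \<alpha>0)) summable_on UNIV"
proof -
  define d where "d = CARD('d)"
  have d1: "d \<ge> 1" unfolding d_def by (simp add: Suc_le_eq)
  define \<beta> where "\<beta> = 2 * \<alpha>0 / d"
  have b1: "\<beta> > 1" unfolding \<beta>_def using a0 d1 unfolding d_def by (simp add: field_simps)
  define h where "h j = (max 1 \<bar>real_of_int j\<bar>) powr (-\<beta>)" for j :: int
  have hs: "h summable_on UNIV" unfolding h_def by (rule zeta_int_summable[OF b1])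
  have h0: "0 \<le> h j" for j unfolding h_def by simp
  define H where "H = (\<Sum>\<^sub>\<infinity>j. h j)"
  have pw: "jbr k powr (-2 * \<alpha>0) \<le> (\<Prod>v\<in>UNIV. h (k $ v))" for k :: "'d idx"
  proof -
    have "(\<Prod>v\<in>(UNIV::'d set). jbr k powr (-\<beta>)) \<le> (\<Prod>v\<in>UNIV. h (k $ v))"
    proof (rule prod_mono)
      fix v :: 'd
      have "jbr k powr (-\<beta>) \<le> (max 1 \<bar>real_of_int (k $ v)\<bar>) powr (-\<beta>)"
        by (rule powr_mono2') (use b1 abs_le_jbr[of k v] in auto)
      then show "0 \<le> jbr k powr (-\<beta>) \<and> jbr k powr (-\<beta>) \<le> h (k $ v)" unfolding h_def by simp
    qed
    moreover have "(\<Prod>v\<in>(UNIV::'d set). jbr k powr (-\<beta>)) = jbr k powr (-2 * \<alpha>0)"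
    proof -
      have "(\<Prod>v\<in>(UNIV::'d set). jbr k powr (-\<beta>)) = (jbr k powr (-\<beta>)) ^ d" by (simp add: d_def)
      also have "\<dots> = (jbr k powr (-\<beta>)) powr (real d)" using jbr_pos[of k] by (intro powr_realpow[symmetric]) simp
      also have "\<dots> = jbr k powr (-2 * \<alpha>0)" unfolding powr_powr \<beta>_def using d1 jbr_pos[of k] by simp
      finally show ?thesis .
    qed
    ultimately show ?thesis by simp
  qed
  have fin: "(\<Sum>k\<in>F. jbr k powr (-2 * \<alpha>0)) \<le> H ^ d" if F: "finite F" for F :: "'d idx set"
  proof -
    define N where "N = Max (insert 0 (supnorm ` F))"
    have kN: "supnorm k \<le> N" if "k \<in> F" for k unfolding N_def using F that by (intro Max_ge) auto
    define P where "P = PiE (UNIV::'d set) (\<lambda>_. {-N..N})"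
    have Pfin: "finite P" unfolding P_def by (intro finite_PiE) auto
    have inj: "inj_on vec_lambda P" by (auto simp: inj_on_def)
    have sub: "F \<subseteq> vec_lambda ` P"
    proof
      fix k assume k: "k \<in> F"
      have "vec_nth k \<in> P" unfolding P_def
      proof (simp add: PiE_iff, intro allI conjI)
        fix v
        show "- N \<le> k $ v" "k $ v \<le> N" using abs_le_supnorm[of k v] kN[OF k] by linarith+
      qed
      moreover have "k = vec_lambda (vec_nth k)" by (simp add: vec_nth_inverse)
      ultimately show "k \<in> vec_lambda ` P" by blast
    qed
    have "(\<Sum>k\<in>F. jbr k powr (-2 * \<alpha>0)) \<le> (\<Sum>k\<in>F. \<Prod>v\<in>UNIV. h (k $ v))"
      by (rule sum_mono) (rule pw)
    also have "\<dots> \<le> (\<Sum>k\<in>vec_lambda ` P. \<Prod>v\<in>UNIV. h (k $ v))"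
      by (rule sum_mono2) (use sub Pfin h0 in \<open>auto intro: prod_nonneg\<close>)
    also have "\<dots> = (\<Sum>g\<in>P. \<Prod>v\<in>UNIV. h (g v))"
      by (subst sum.reindex[OF inj]) simp
    also have "\<dots> = (\<Prod>v\<in>(UNIV::'d set). \<Sum>j\<in>{-N..N}. h j)"
      unfolding P_def by (rule prod_sum_PiE[symmetric]) auto
    also have "\<dots> \<le> (\<Prod>v\<in>(UNIV::'d set). H)"
    proof (rule prod_mono)
      fix v :: 'd
      show "0 \<le> (\<Sum>j\<in>{-N..N}. h j) \<and> (\<Sum>j\<in>{-N..N}. h j) \<le> H"
        unfolding H_def using sum_le_infsum_gen[OF hs h0, of "{-N..N}"] h0 by (auto intro: sum_nonneg)
    qed
    also have "\<dots> = H ^ d" by (simp add: d_def)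
    finally show ?thesis .
  qed
  show ?thesis
  proof (rule nonneg_bdd_above_summable_on)
    show "0 \<le> jbr k powr (-2 * \<alpha>0)" for k :: "'d idx" by simp
    show "bdd_above (sum (\<lambda>k::'d idx. jbr k powr (-2 * \<alpha>0)) ` {F. F \<subseteq> UNIV \<and> finite F})"
    proof (rule bdd_aboveI[of _ "H ^ d"])
      fix x assume "x \<in> sum (\<lambda>k::'d idx. jbr k powr (-2 * \<alpha>0)) ` {F. F \<subseteq> UNIV \<and> finite F}"
      then show "x \<le> H ^ d"
      proof (rule imageE)
        fix F assume F0: "F \<in> {F. F \<subseteq> UNIV \<and> finite F}" and xF: "x = sum (\<lambda>k::'d idx. jbr k powr (-2 * \<alpha>0)) F"
        from F0 have F: "finite F" by simp
        show "x \<le> H ^ d" unfolding xF by (rule fin[OF F])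
      qed
    qed
  qed
qed




locale mctx = sba B nB for B :: "'d::finite sq set" and nB +
  fixes \<alpha>0 :: real
  assumes a0: "\<alpha>0 > real CARD('d) / 2"
begin

definition nd :: "'d mat \<Rightarrow> 'd idx \<Rightarrow> real" where "nd A k = nB (diag A k)"

definition S :: real where "S = (\<Sum>\<^sub>\<infinity>k::'d idx. jbr k powr (-2 * \<alpha>0))"

lemma a0pos: "\<alpha>0 > 0"
proof -
  have "real CARD('d) / 2 > 0" by simp
  then show ?thesis using a0 by linarith
qed

lemma Ssum: "(\<lambda>k::'d idx. jbr k powr (-2 * \<alpha>0)) summable_on UNIV"
  by (rule S_summable[OF a0])

lemma S_ge1: "S \<ge> 1"
proof -
  have "jbr (0::'d idx) powr (-2 * \<alpha>0) \<le> S"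
    unfolding S_def by (rule term_le_infsum[OF Ssum]) simp
  then show ?thesis by (simp add: jbr_zero)
qed

lemma MsD:
  assumes "A \<in> Ms B nB s"
  shows "\<And>k. diag A k \<in> B" "(\<lambda>k. (nd A k)\<^sup>2 * jbr k powr (2 * s)) summable_on UNIV"
  using assms unfolding Ms_def nd_def by auto

lemma nd_nonneg: "A \<in> Ms B nB s \<Longrightarrow> 0 \<le> nd A k"
  unfolding nd_def using MsD(1) nB_nonneg by blast

lemma snorm_def': "snorm nB s A = sqrt (\<Sum>\<^sub>\<infinity>k. (nd A k)\<^sup>2 * jbr k powr (2 * s))"
  unfolding snorm_def nd_def ..

lemma snorm_nonneg: "0 \<le> snorm nB s A"
  unfolding snorm_def by (intro real_sqrt_ge_zero infsum_nonneg) simp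

lemma Ms_mono:
  assumes A: "A \<in> Ms B nB s" and ss: "s' \<le> s"
  shows "A \<in> Ms B nB s'" "snorm nB s' A \<le> snorm nB s A"
proof -
  have le: "(nd A k)\<^sup>2 * jbr k powr (2 * s') \<le> (nd A k)\<^sup>2 * jbr k powr (2 * s)" for k
    by (rule mult_left_mono) (use ss jbr_ge1[of k] in \<open>auto intro: powr_mono\<close>)
  have sm: "(\<lambda>k. (nd A k)\<^sup>2 * jbr k powr (2 * s')) summable_on UNIV"
    by (rule summable_on_comparison_test[OF MsD(2)[OF A]]) (use le in auto)
  then show "A \<in> Ms B nB s'" using MsD(1)[OF A] unfolding Ms_def nd_def by auto
  show "snorm nB s' A \<le> snorm nB s A" unfolding snorm_def'
    by (rule real_sqrt_le_mono, rule infsum_mono[OF sm MsD(2)[OF A]]) (use le in auto)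
qed

lemma l2_sum:
  assumes A: "A \<in> Ms B nB s" and s0: "0 \<le> s"
  shows "(\<lambda>k. (nd A k)\<^sup>2) summable_on UNIV"
proof -
  have e: "(\<lambda>k. (nd A k)\<^sup>2 * jbr k powr (2 * 0)) = (\<lambda>k. (nd A k)\<^sup>2)"
    using jbr_pos by (metis mult_zero_right powr_zero_eq_one mult_1_right order_less_irrefl)
  show ?thesis using MsD(2)[OF Ms_mono(1)[OF A s0]] unfolding e .
qed

lemma nd_le:
  assumes A: "A \<in> Ms B nB s" and s0: "0 \<le> s"
  shows "nd A k \<le> snorm nB s A"
proof -
  have "(nd A k)\<^sup>2 * jbr k powr (2 * s) \<le> (\<Sum>\<^sub>\<infinity>k. (nd A k)\<^sup>2 * jbr k powr (2 * s))"
    by (rule term_le_infsum[OF MsD(2)[OF A]]) simp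
  moreover have "(nd A k)\<^sup>2 \<le> (nd A k)\<^sup>2 * jbr k powr (2 * s)"
  proof -
    have "1 \<le> jbr k powr (2 * s)" by (rule ge_one_powr_ge_zero) (use jbr_ge1[of k] s0 in auto)
    then show ?thesis using mult_left_mono[of 1 _ "(nd A k)\<^sup>2"] by simp
  qed
  ultimately have "(nd A k)\<^sup>2 \<le> (snorm nB s A)\<^sup>2" unfolding snorm_def'
    by (simp add: infsum_nonneg)
  then show ?thesis using snorm_nonneg[of s A] nd_nonneg[OF A] by (simp add: power2_le_iff_abs_le)
qed

lemma entry_le:
  assumes A: "A \<in> Ms B nB s"
  shows "cmod (A i j) \<le> nd A (i - j)"
proof -
  have "A i j = diag A (i - j) i" unfolding diag_def by simp
  then show ?thesis unfolding nd_def using eval_le[OF MsD(1)[OF A]] by simp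
qed

lemma l1:
  assumes A: "A \<in> Ms B nB \<alpha>0"
  shows "(\<lambda>k. nd A k) summable_on UNIV \<and> (\<Sum>\<^sub>\<infinity>k. nd A k) \<le> sqrt S * snorm nB \<alpha>0 A"
proof -
  define x where "x k = nd A k * jbr k powr \<alpha>0" for k
  define y where "y k = jbr k powr (-\<alpha>0)" for k :: "'d idx"
  have xy: "x k * y k = nd A k" for k
    unfolding x_def y_def using jbr_pos[of k] by (simp add: powr_minus field_simps)
  have x2: "(x k)\<^sup>2 = (nd A k)\<^sup>2 * jbr k powr (2 * \<alpha>0)" for k
    unfolding x_def using jbr_pos[of k] by (simp add: power_mult_distrib powr_powr[symmetric] power2_eq_square powr_add[symmetric])
  have y2: "(y k)\<^sup>2 = jbr k powr (-2 * \<alpha>0)" for k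
    unfolding y_def using jbr_pos[of k] by (simp add: power2_eq_square powr_add[symmetric])
  have "(\<lambda>k. x k * y k) summable_on UNIV \<and> (\<Sum>\<^sub>\<infinity>k. x k * y k)\<^sup>2 \<le> (\<Sum>\<^sub>\<infinity>k. (x k)\<^sup>2) * (\<Sum>\<^sub>\<infinity>k. (y k)\<^sup>2)"
  proof (rule CS_inf)
    show "(\<lambda>k. (x k)\<^sup>2) summable_on UNIV" unfolding x2 by (rule MsD(2)[OF A])
    show "(\<lambda>k. (y k)\<^sup>2) summable_on UNIV" unfolding y2 by (rule Ssum)
    show "0 \<le> x k" for k unfolding x_def using nd_nonneg[OF A] by simp
    show "0 \<le> y k" for k unfolding y_def by simp
  qed
  then have h: "(\<lambda>k. nd A k) summable_on UNIV" "(\<Sum>\<^sub>\<infinity>k. nd A k)\<^sup>2 \<le> (snorm nB \<alpha>0 A)\<^sup>2 * S"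
    unfolding xy x2 y2 snorm_def' S_def by (auto simp: infsum_nonneg)
  have "0 \<le> (\<Sum>\<^sub>\<infinity>k. nd A k)" by (rule infsum_nonneg) (simp add: nd_nonneg[OF A])
  then have "(\<Sum>\<^sub>\<infinity>k. nd A k) \<le> sqrt ((snorm nB \<alpha>0 A)\<^sup>2 * S)"
    using h(2) real_le_rsqrt by blast
  also have "\<dots> = sqrt S * snorm nB \<alpha>0 A" using snorm_nonneg[of \<alpha>0 A] by (simp add: real_sqrt_mult)
  finally show ?thesis using h(1) by simp
qed


lemma snorm_sq:
  assumes "A \<in> Ms B nB s"
  shows "(snorm nB s A)\<^sup>2 = (\<Sum>\<^sub>\<infinity>k. (nd A k)\<^sup>2 * jbr k powr (2 * s))"
  unfolding snorm_def' by (simp add: infsum_nonneg)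

lemma sq_weight: "(x * jbr k powr s)\<^sup>2 = x\<^sup>2 * jbr k powr (2 * s)"
  using jbr_pos[of k] by (simp add: power_mult_distrib power2_eq_square powr_add[symmetric])

lemma prod_diag:
  assumes A: "A \<in> Ms B nB \<alpha>0" and C: "C \<in> Ms B nB \<alpha>0"
  shows "(\<lambda>k. nd A k * nd C (m - k)) summable_on UNIV \<and> diag (mmult A C) m \<in> B \<and>
         nd (mmult A C) m \<le> (\<Sum>\<^sub>\<infinity>k. nd A k * nd C (m - k))"
proof -
  have sm1: "(\<lambda>k. nd A k * nd C (m - k)) summable_on UNIV"
    using young[of "nd A" "nd C"] nd_nonneg[OF A] nd_nonneg[OF C] l1[OF A] l2_sum[OF C] a0pos by auto
  define f where "f k = (\<lambda>i. diag A k i * shift k (diag C (m - k)) i)" for k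
  have fB: "f k \<in> B" for k unfolding f_def
    by (rule mult_in[OF MsD(1)[OF A] shift_in[OF MsD(1)[OF C]]])
  have fn: "nB (f k) \<le> nd A k * nd C (m - k)" for k
    unfolding f_def nd_def using nB_mult[OF MsD(1)[OF A] shift_in[OF MsD(1)[OF C]]] nB_shift[OF MsD(1)[OF C]]
    by simp
  have sm: "(\<lambda>k. nB (f k)) summable_on UNIV"
    by (rule summable_on_comparison_test[OF sm1]) (use fn nB_nonneg[OF fB] in auto)
  obtain e where e: "bij_betw e (UNIV::nat set) (UNIV::'d idx set)" using idx_bij by blast
  have G: "(\<lambda>i. \<Sum>\<^sub>\<infinity>k. f k i) \<in> B \<and> nB (\<lambda>i. \<Sum>\<^sub>\<infinity>k. f k i) \<le> (\<Sum>\<^sub>\<infinity>k. nB (f k))"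
    using G_gen[OF e fB sm] by blast
  have eq: "diag (mmult A C) m = (\<lambda>i. \<Sum>\<^sub>\<infinity>k. f k i)"
  proof
    fix i
    have "(\<Sum>\<^sub>\<infinity>k. f k i) = (\<Sum>\<^sub>\<infinity>k. (\<lambda>l. A i l * C l (i - m)) (i - k))"
      unfolding f_def diag_def shift_def by (simp add: algebra_simps)
    also have "\<dots> = (\<Sum>\<^sub>\<infinity>l. A i l * C l (i - m))"
      by (rule infsum_reindex_bij_betw[OF bij_minus_right])
    finally show "diag (mmult A C) m i = (\<Sum>\<^sub>\<infinity>k. f k i)"
      unfolding diag_def mmult_def by simp
  qed
  have "(\<Sum>\<^sub>\<infinity>k. nB (f k)) \<le> (\<Sum>\<^sub>\<infinity>k. nd A k * nd C (m - k))"
    by (rule infsum_mono[OF sm sm1]) (rule fn)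
  then show ?thesis using G eq sm1 unfolding nd_def by simp
qed


lemma sqrt_sum_sq_le: "0 \<le> p \<Longrightarrow> 0 \<le> q \<Longrightarrow> sqrt (p\<^sup>2 + q\<^sup>2) \<le> p + q"
  by (rule real_le_lsqrt) (auto simp: power2_eq_square algebra_simps)

lemma K0_eq: "K0 TYPE('d) \<alpha>0 = sqrt (20 * S)"
  unfolding K0_def S_def ..

lemma K1_eq: "K1 TYPE('d) \<alpha>0 s = (1 - 10 powr (-1 / (2 * s))) powr (-s) * sqrt (2 * S)"
  unfolding K1_def S_def ..

lemma tame:
  assumes A: "A \<in> Ms B nB s" and C: "C \<in> Ms B nB s" and s: "\<alpha>0 \<le> s"
  shows "mmult A C \<in> Ms B nB s \<and>
    snorm nB s (mmult A C) \<le> K0 TYPE('d) \<alpha>0 * snorm nB \<alpha>0 A * snorm nB s C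
                            + K1 TYPE('d) \<alpha>0 s * snorm nB s A * snorm nB \<alpha>0 C"
proof -
  have A0: "A \<in> Ms B nB \<alpha>0" and C0: "C \<in> Ms B nB \<alpha>0" using Ms_mono(1) A C s by auto
  have spos: "0 < s" using a0pos s by simp
  define a where "a = nd A"
  define c where "c = nd C"
  define ab where "ab k = a k * jbr k powr s" for k
  define cb where "cb k = c k * jbr k powr s" for k
  define T where "T = (1 - 10 powr (-1 / (2 * s))) powr (-s)"
  have T0: "0 \<le> T" unfolding T_def by simp
  have a0': "0 \<le> a k" "0 \<le> c k" "0 \<le> ab k" "0 \<le> cb k" for k
    unfolding a_def c_def ab_def cb_def using nd_nonneg[OF A] nd_nonneg[OF C] by auto
  have al1: "a summable_on UNIV" "(\<Sum>\<^sub>\<infinity>k. a k) \<le> sqrt S * snorm nB \<alpha>0 A"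
    using l1[OF A0] unfolding a_def by auto
  have cl1: "c summable_on UNIV" "(\<Sum>\<^sub>\<infinity>k. c k) \<le> sqrt S * snorm nB \<alpha>0 C"
    using l1[OF C0] unfolding c_def by auto
  have ab2: "(\<lambda>k. (ab k)\<^sup>2) summable_on UNIV" "(\<Sum>\<^sub>\<infinity>k. (ab k)\<^sup>2) = (snorm nB s A)\<^sup>2"
    unfolding ab_def sq_weight a_def using MsD(2)[OF A] snorm_sq[OF A] by auto
  have cb2: "(\<lambda>k. (cb k)\<^sup>2) summable_on UNIV" "(\<Sum>\<^sub>\<infinity>k. (cb k)\<^sup>2) = (snorm nB s C)\<^sup>2"
    unfolding cb_def sq_weight c_def using MsD(2)[OF C] snorm_sq[OF C] by auto
  define X where "X m = (\<Sum>\<^sub>\<infinity>k. a k * cb (m - k))" for m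
  define Y where "Y m = (\<Sum>\<^sub>\<infinity>k. c k * ab (m - k))" for m
  have yX: "(\<forall>m. (\<lambda>k. a k * cb (m - k)) summable_on UNIV) \<and> (\<lambda>m. (X m)\<^sup>2) summable_on UNIV \<and>
        (\<Sum>\<^sub>\<infinity>m. (X m)\<^sup>2) \<le> (\<Sum>\<^sub>\<infinity>k. a k)\<^sup>2 * (\<Sum>\<^sub>\<infinity>k. (cb k)\<^sup>2)"
    unfolding X_def by (rule young) (use a0' al1 cb2 in auto)
  have yY: "(\<forall>m. (\<lambda>k. c k * ab (m - k)) summable_on UNIV) \<and> (\<lambda>m. (Y m)\<^sup>2) summable_on UNIV \<and>
        (\<Sum>\<^sub>\<infinity>m. (Y m)\<^sup>2) \<le> (\<Sum>\<^sub>\<infinity>k. c k)\<^sup>2 * (\<Sum>\<^sub>\<infinity>k. (ab k)\<^sup>2)"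
    unfolding Y_def by (rule young) (use a0' cl1 ab2 in auto)
  have X0: "0 \<le> X m" for m unfolding X_def by (rule infsum_nonneg) (simp add: a0')
  have Y0: "0 \<le> Y m" for m unfolding Y_def by (rule infsum_nonneg) (simp add: a0')
  have pw: "nd (mmult A C) m * jbr m powr s \<le> sqrt 10 * X m + T * Y m" for m
  proof -
    have pd: "(\<lambda>k. a k * c (m - k)) summable_on UNIV" "nd (mmult A C) m \<le> (\<Sum>\<^sub>\<infinity>k. a k * c (m - k))"
      using prod_diag[OF A0 C0, of m] unfolding a_def c_def by auto
    have reY: "(\<Sum>\<^sub>\<infinity>k. ab k * c (m - k)) = Y m"
    proof -
      have "(\<Sum>\<^sub>\<infinity>k. ab k * c (m - k)) = (\<Sum>\<^sub>\<infinity>k. (\<lambda>j. ab (m - j) * c j) (m - k))" by simp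
      also have "\<dots> = (\<Sum>\<^sub>\<infinity>j. ab (m - j) * c j)" by (rule infsum_reindex_bij_betw[OF bij_minus_right])
      finally show ?thesis unfolding Y_def by (simp add: mult.commute)
    qed
    have smY: "(\<lambda>k. ab k * c (m - k)) summable_on UNIV"
    proof -
      have "(\<lambda>j. c j * ab (m - j)) summable_on UNIV" using yY by blast
      then have "(\<lambda>k. (\<lambda>j. c j * ab (m - j)) (m - k)) summable_on UNIV"
        using summable_on_reindex_bij_betw[OF bij_minus_right, of "\<lambda>j. c j * ab (m - j)" m] by simp
      then show ?thesis by (simp add: mult.commute)
    qed
    have smX: "(\<lambda>k. a k * cb (m - k)) summable_on UNIV" using yX by blast
    have "nd (mmult A C) m * jbr m powr s \<le> (\<Sum>\<^sub>\<infinity>k. a k * c (m - k)) * jbr m powr s"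
      by (rule mult_right_mono[OF pd(2)]) simp
    also have "\<dots> = (\<Sum>\<^sub>\<infinity>k. a k * c (m - k) * jbr m powr s)" by (simp add: infsum_cmult_left')
    also have "\<dots> \<le> (\<Sum>\<^sub>\<infinity>k. sqrt 10 * (a k * cb (m - k)) + T * (ab k * c (m - k)))"
    proof (rule infsum_mono)
      show "(\<lambda>k. a k * c (m - k) * jbr m powr s) summable_on UNIV"
        by (rule summable_on_cmult_left[OF pd(1)])
      show "(\<lambda>k. sqrt 10 * (a k * cb (m - k)) + T * (ab k * c (m - k))) summable_on UNIV"
        by (rule summable_on_add[OF summable_on_cmult_right[OF smX] summable_on_cmult_right[OF smY]])
      fix k
      have w: "jbr m powr s \<le> sqrt 10 * jbr (m - k) powr s + T * jbr k powr s"
        unfolding T_def by (rule weight_split[OF spos])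
      have "a k * c (m - k) * jbr m powr s \<le> a k * c (m - k) * (sqrt 10 * jbr (m - k) powr s + T * jbr k powr s)"
        by (rule mult_left_mono[OF w]) (simp add: a0')
      then show "a k * c (m - k) * jbr m powr s \<le> sqrt 10 * (a k * cb (m - k)) + T * (ab k * c (m - k))"
        unfolding ab_def cb_def by (simp add: algebra_simps)
    qed
    also have "\<dots> = sqrt 10 * X m + T * Y m"
      unfolding X_def reY[symmetric]
      by (simp add: infsum_add[OF summable_on_cmult_right[OF smX] summable_on_cmult_right[OF smY]] infsum_cmult_right')
    finally show ?thesis .
  qed
  have pw2: "(nd (mmult A C) m)\<^sup>2 * jbr m powr (2 * s) \<le> 20 * (X m)\<^sup>2 + 2 * T\<^sup>2 * (Y m)\<^sup>2" for m
  proof -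
    have nn0: "0 \<le> nd (mmult A C) m * jbr m powr s" using nB_nonneg prod_diag[OF A0 C0, of m] unfolding nd_def by simp
    have "(nd (mmult A C) m * jbr m powr s)\<^sup>2 \<le> (sqrt 10 * X m + T * Y m)\<^sup>2"
      by (rule power_mono[OF pw[of m] nn0])
    also have "\<dots> \<le> 20 * (X m)\<^sup>2 + 2 * T\<^sup>2 * (Y m)\<^sup>2"
    proof -
      have "0 \<le> (sqrt 10 * X m - T * Y m)\<^sup>2" by simp
      then show ?thesis by (simp add: power2_eq_square algebra_simps)
    qed
    finally show ?thesis unfolding sq_weight .
  qed
  have smR: "(\<lambda>m. 20 * (X m)\<^sup>2 + 2 * T\<^sup>2 * (Y m)\<^sup>2) summable_on UNIV"
    using summable_on_add[OF summable_on_cmult_right[of "\<lambda>m. (X m)\<^sup>2"] summable_on_cmult_right[of "\<lambda>m. (Y m)\<^sup>2"]] yX yY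
    by blast
  have smP: "(\<lambda>m. (nd (mmult A C) m)\<^sup>2 * jbr m powr (2 * s)) summable_on UNIV"
    by (rule summable_on_comparison_test[OF smR]) (use pw2 in auto)
  have diagB: "diag (mmult A C) m \<in> B" for m using prod_diag[OF A0 C0] by blast
  have inMs: "mmult A C \<in> Ms B nB s" unfolding Ms_def using diagB smP unfolding nd_def by auto
  define A0n where "A0n = snorm nB \<alpha>0 A"
  define C0n where "C0n = snorm nB \<alpha>0 C"
  define Asn where "Asn = snorm nB s A"
  define Csn where "Csn = snorm nB s C"
  have nn: "0 \<le> A0n" "0 \<le> C0n" "0 \<le> Asn" "0 \<le> Csn"
    unfolding A0n_def C0n_def Asn_def Csn_def by (auto simp: snorm_nonneg)
  have suma: "(\<Sum>\<^sub>\<infinity>k. a k)\<^sup>2 \<le> S * A0n\<^sup>2"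
  proof -
    have h0: "0 \<le> (\<Sum>\<^sub>\<infinity>k. a k)" by (rule infsum_nonneg) (simp add: a0')
    have "(\<Sum>\<^sub>\<infinity>k. a k)\<^sup>2 \<le> (sqrt S * A0n)\<^sup>2" unfolding A0n_def by (rule power_mono[OF al1(2) h0])
    then show ?thesis using S_ge1 by (simp add: power_mult_distrib)
  qed
  have sumc: "(\<Sum>\<^sub>\<infinity>k. c k)\<^sup>2 \<le> S * C0n\<^sup>2"
  proof -
    have h0: "0 \<le> (\<Sum>\<^sub>\<infinity>k. c k)" by (rule infsum_nonneg) (simp add: a0')
    have "(\<Sum>\<^sub>\<infinity>k. c k)\<^sup>2 \<le> (sqrt S * C0n)\<^sup>2" unfolding C0n_def by (rule power_mono[OF cl1(2) h0])
    then show ?thesis using S_ge1 by (simp add: power_mult_distrib)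
  qed
  have SX: "(\<Sum>\<^sub>\<infinity>m. (X m)\<^sup>2) \<le> S * A0n\<^sup>2 * Csn\<^sup>2"
  proof -
    have "(\<Sum>\<^sub>\<infinity>m. (X m)\<^sup>2) \<le> (\<Sum>\<^sub>\<infinity>k. a k)\<^sup>2 * Csn\<^sup>2" using yX cb2(2) unfolding Csn_def by simp
    also have "\<dots> \<le> S * A0n\<^sup>2 * Csn\<^sup>2" by (rule mult_right_mono[OF suma]) simp
    finally show ?thesis .
  qed
  have SY: "(\<Sum>\<^sub>\<infinity>m. (Y m)\<^sup>2) \<le> S * C0n\<^sup>2 * Asn\<^sup>2"
  proof -
    have "(\<Sum>\<^sub>\<infinity>m. (Y m)\<^sup>2) \<le> (\<Sum>\<^sub>\<infinity>k. c k)\<^sup>2 * Asn\<^sup>2" using yY ab2(2) unfolding Asn_def by simp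
    also have "\<dots> \<le> S * C0n\<^sup>2 * Asn\<^sup>2" by (rule mult_right_mono[OF sumc]) simp
    finally show ?thesis .
  qed
  have "(\<Sum>\<^sub>\<infinity>m. (nd (mmult A C) m)\<^sup>2 * jbr m powr (2 * s)) \<le> (\<Sum>\<^sub>\<infinity>m. 20 * (X m)\<^sup>2 + 2 * T\<^sup>2 * (Y m)\<^sup>2)"
    by (rule infsum_mono[OF smP smR]) (rule pw2)
  also have "\<dots> = 20 * (\<Sum>\<^sub>\<infinity>m. (X m)\<^sup>2) + 2 * T\<^sup>2 * (\<Sum>\<^sub>\<infinity>m. (Y m)\<^sup>2)"
    using yX yY by (simp add: infsum_add summable_on_cmult_right infsum_cmult_right')
  also have "\<dots> \<le> 20 * (S * A0n\<^sup>2 * Csn\<^sup>2) + 2 * T\<^sup>2 * (S * C0n\<^sup>2 * Asn\<^sup>2)"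
    by (intro add_mono mult_left_mono SX SY) auto
  also have "\<dots> = (sqrt (20 * S) * A0n * Csn)\<^sup>2 + (T * sqrt (2 * S) * Asn * C0n)\<^sup>2"
    using S_ge1 by (simp add: power_mult_distrib)
  finally have le: "(\<Sum>\<^sub>\<infinity>m. (nd (mmult A C) m)\<^sup>2 * jbr m powr (2 * s))
      \<le> (sqrt (20 * S) * A0n * Csn)\<^sup>2 + (T * sqrt (2 * S) * Asn * C0n)\<^sup>2" .
  have "snorm nB s (mmult A C) \<le> sqrt ((sqrt (20 * S) * A0n * Csn)\<^sup>2 + (T * sqrt (2 * S) * Asn * C0n)\<^sup>2)"
    unfolding snorm_def' by (rule real_sqrt_le_mono[OF le])
  also have "\<dots> \<le> sqrt (20 * S) * A0n * Csn + T * sqrt (2 * S) * Asn * C0n"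
    by (rule sqrt_sum_sq_le) (use nn T0 S_ge1 in auto)
  finally show ?thesis using inMs unfolding K0_eq K1_eq T_def A0n_def C0n_def Asn_def Csn_def
    by (simp add: mult.assoc)
qed

end



lemma swap_bound:
  fixes F :: "'a \<Rightarrow> 'b \<Rightarrow> complex" and G :: "'a \<Rightarrow> 'b \<Rightarrow> real"
  assumes FG: "\<And>a b. cmod (F a b) \<le> G a b"
    and Ghas: "\<And>a. (G a has_sum g a) UNIV" and gs: "g summable_on UNIV"
  shows "(\<Sum>\<^sub>\<infinity>a. \<Sum>\<^sub>\<infinity>b. F a b) = (\<Sum>\<^sub>\<infinity>b. \<Sum>\<^sub>\<infinity>a. F a b)"
    and "\<And>a. F a summable_on UNIV" and "\<And>b. (\<lambda>a. F a b) summable_on UNIV"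
    and "(\<lambda>a. \<Sum>\<^sub>\<infinity>b. F a b) summable_on UNIV" and "(\<lambda>b. \<Sum>\<^sub>\<infinity>a. F a b) summable_on UNIV"
proof -
  have G0: "0 \<le> G a b" for a b using FG[of a b] norm_ge_zero order_trans by blast
  have Gs: "(\<lambda>(a, b). G a b) summable_on Sigma UNIV (\<lambda>_. UNIV)"
    by (rule summable_on_SigmaI[where g=g]) (use Ghas gs G0 in auto)
  have Gs2: "(\<lambda>x. G (fst x) (snd x)) summable_on UNIV \<times> UNIV"
    using Gs by (simp add: case_prod_unfold)
  have Fabs: "(\<lambda>x. norm (F (fst x) (snd x))) summable_on UNIV \<times> UNIV"
    by (rule summable_on_comparison_test[OF Gs2]) (use FG in auto)
  have Fs: "(\<lambda>(a, b). F a b) summable_on UNIV \<times> UNIV"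
    using abs_summable_summable[OF Fabs] by (simp add: case_prod_unfold)
  show "(\<Sum>\<^sub>\<infinity>a. \<Sum>\<^sub>\<infinity>b. F a b) = (\<Sum>\<^sub>\<infinity>b. \<Sum>\<^sub>\<infinity>a. F a b)"
    by (rule infsum_swap_banach[OF Fs])
  have Fs': "(\<lambda>(b, a). F a b) summable_on UNIV \<times> UNIV"
    using Fs summable_on_swap[of "\<lambda>(a, b). F a b" UNIV UNIV] by (simp add: case_prod_unfold)
  show Fa: "F a summable_on UNIV" for a
    using summable_on_SigmaD1[of F UNIV "\<lambda>_. UNIV" a] Fs by simp
  show Fb: "(\<lambda>a. F a b) summable_on UNIV" for b
    using summable_on_SigmaD1[of "\<lambda>b a. F a b" UNIV "\<lambda>_. UNIV" b] Fs' by simp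
  show "(\<lambda>a. \<Sum>\<^sub>\<infinity>b. F a b) summable_on UNIV"
    using summable_on_SigmaD[of "\<lambda>(a, b). F a b" UNIV "\<lambda>_. UNIV"] Fs Fa by simp
  show "(\<lambda>b. \<Sum>\<^sub>\<infinity>a. F a b) summable_on UNIV"
    using summable_on_SigmaD[of "\<lambda>(b, a). F a b" UNIV "\<lambda>_. UNIV"] Fs' Fb by simp
qed

lemma infsum_nat_shift:
  fixes f :: "nat \<Rightarrow> 'a::banach"
  assumes "f summable_on UNIV"
  shows "infsum f UNIV = f 0 + (\<Sum>\<^sub>\<infinity>n. f (Suc n))"
proof -
  have U: "UNIV = {0} \<union> range Suc" by (auto simp: image_iff) (metis not0_implies_Suc)
  have s1: "f summable_on {0}" by simp
  have s2: "f summable_on range Suc" by (rule summable_on_subset_banach[OF assms]) simp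
  have "infsum f UNIV = infsum f {0} + infsum f (range Suc)"
    by (subst U, rule infsum_Un_disjoint[OF s1 s2]) auto
  also have "infsum f (range Suc) = (\<Sum>\<^sub>\<infinity>n. f (Suc n))"
    by (subst infsum_reindex) (auto simp: o_def)
  finally show ?thesis by simp
qed

lemma two_term:
  fixes f :: "nat \<Rightarrow> real"
  assumes "\<And>n. n \<ge> 2 \<Longrightarrow> f n = 0"
  shows "f summable_on UNIV \<and> infsum f UNIV = f 0 + f 1"
proof -
  have "f summable_on UNIV \<longleftrightarrow> f summable_on {0, 1}"
    by (rule summable_on_cong_neutral) (use assms in \<open>auto simp: not_less_eq_eq\<close>)
  moreover have "infsum f UNIV = infsum f {0, 1}"
    by (rule infsum_cong_neutral) (use assms in \<open>auto simp: not_less_eq_eq\<close>)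
  ultimately show ?thesis by simp
qed

lemma triangle:
  fixes x y u w :: "'a \<Rightarrow> real"
  assumes x0: "\<And>k. 0 \<le> x k" and y0: "\<And>k. 0 \<le> y k" and u0: "\<And>k. 0 \<le> u k" and w0: "\<And>k. 0 \<le> w k"
    and xs: "(\<lambda>k. (x k)\<^sup>2 * w k) summable_on UNIV" and ys: "(\<lambda>k. (y k)\<^sup>2 * w k) summable_on UNIV"
    and ule: "\<And>k. u k \<le> x k + y k"
  shows "(\<lambda>k. (u k)\<^sup>2 * w k) summable_on UNIV \<and>
    sqrt (\<Sum>\<^sub>\<infinity>k. (u k)\<^sup>2 * w k) \<le> sqrt (\<Sum>\<^sub>\<infinity>k. (x k)\<^sup>2 * w k) + sqrt (\<Sum>\<^sub>\<infinity>k. (y k)\<^sup>2 * w k)"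
proof -
  define v where "v n = (if n = 0 then x else if n = 1 then y else (\<lambda>_. 0))" for n :: nat
  have v2: "v n = (\<lambda>_. 0)" if "n \<ge> 2" for n using that unfolding v_def by auto
  have vk: "(\<lambda>n. v n k) summable_on UNIV \<and> (\<Sum>\<^sub>\<infinity>n. v n k) = x k + y k" for k
    using two_term[of "\<lambda>n. v n k"] v2 unfolding v_def by auto
  define N where "N n = sqrt (\<Sum>\<^sub>\<infinity>k. (v n k)\<^sup>2 * w k)" for n
  have N: "N summable_on UNIV \<and> infsum N UNIV = N 0 + N 1"
    by (rule two_term) (simp add: N_def v2)
  have "(\<lambda>k. (u k)\<^sup>2 * w k) summable_on UNIV \<and>
         sqrt (\<Sum>\<^sub>\<infinity>k. (u k)\<^sup>2 * w k) \<le> (\<Sum>\<^sub>\<infinity>n. sqrt (\<Sum>\<^sub>\<infinity>k. (v n k)\<^sup>2 * w k))"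
  proof (rule minkowski)
    show "0 \<le> v n k" for n k unfolding v_def using x0 y0 by auto
    show "(\<lambda>k. (v n k)\<^sup>2 * w k) summable_on UNIV" for n unfolding v_def using xs ys by auto
    show "(\<lambda>n. v n k) summable_on UNIV" for k using vk by blast
    show "(\<lambda>n. sqrt (\<Sum>\<^sub>\<infinity>k. (v n k)\<^sup>2 * w k)) summable_on UNIV" using N unfolding N_def by blast
    show "u k \<le> (\<Sum>\<^sub>\<infinity>n. v n k)" for k using vk ule by simp
  qed (use w0 u0 in auto)
  moreover have "(\<Sum>\<^sub>\<infinity>n. sqrt (\<Sum>\<^sub>\<infinity>k. (v n k)\<^sup>2 * w k)) = sqrt (\<Sum>\<^sub>\<infinity>k. (x k)\<^sup>2 * w k) + sqrt (\<Sum>\<^sub>\<infinity>k. (y k)\<^sup>2 * w k)"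
    using N unfolding N_def v_def by simp
  ultimately show ?thesis by simp
qed


context mctx
begin

lemma diag_Imat: "diag Imat k = (if k = 0 then (\<lambda>_. 1) else (\<lambda>_. 0))"
  unfolding diag_def Imat_def by auto

lemma nd_Imat: "nd Imat k = (if k = 0 then 1 else 0)"
  unfolding nd_def diag_Imat using nB_one nB_zero by simp

lemma Imat_Ms: "Imat \<in> Ms B nB s" "snorm nB s Imat = 1"
proof -
  have e: "(\<lambda>k. (nd Imat k)\<^sup>2 * jbr k powr (2 * s)) = (\<lambda>k. if k = 0 then 1 else 0)"
    by (auto simp: nd_Imat jbr_zero)
  have "(\<lambda>k::'d idx. if k = 0 then (1::real) else 0) summable_on UNIV \<and>
        (\<Sum>\<^sub>\<infinity>k::'d idx. if k = 0 then (1::real) else 0) = 1"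
  proof -
    have "(\<lambda>k::'d idx. if k = 0 then (1::real) else 0) summable_on UNIV \<longleftrightarrow>
          (\<lambda>k::'d idx. if k = 0 then (1::real) else 0) summable_on {0}"
      by (rule summable_on_cong_neutral) auto
    moreover have "(\<Sum>\<^sub>\<infinity>k::'d idx. if k = 0 then (1::real) else 0) = (\<Sum>\<^sub>\<infinity>k\<in>{0::'d idx}. if k = 0 then (1::real) else 0)"
      by (rule infsum_cong_neutral[where S=UNIV and T="{0}"]) auto
    ultimately show ?thesis by simp
  qed
  moreover have "diag Imat k \<in> B" for k unfolding diag_Imat using one_in zero_in by simp
  ultimately show "Imat \<in> Ms B nB s" "snorm nB s Imat = 1"
    unfolding Ms_def snorm_def' e[symmetric] by (auto simp: nd_def)
qed

lemma single_sum:
  fixes g :: "'d idx \<Rightarrow> complex"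
  shows "(\<lambda>l. (if i = l then 1 else 0) * g l) summable_on UNIV \<and> (\<Sum>\<^sub>\<infinity>l. (if i = l then 1 else 0) * g l) = g i"
    "(\<lambda>l. g l * (if l = j then 1 else 0)) summable_on UNIV \<and> (\<Sum>\<^sub>\<infinity>l. g l * (if l = j then 1 else 0)) = g j"
proof -
  have "(\<lambda>l. (if i = l then 1 else 0) * g l) summable_on UNIV \<longleftrightarrow> (\<lambda>l. (if i = l then 1 else 0) * g l) summable_on {i}"
    by (rule summable_on_cong_neutral) auto
  moreover have "(\<Sum>\<^sub>\<infinity>l. (if i = l then 1 else 0) * g l) = (\<Sum>\<^sub>\<infinity>l\<in>{i}. (if i = l then 1 else 0) * g l)"
    by (rule infsum_cong_neutral) auto
  ultimately show "(\<lambda>l. (if i = l then 1 else 0) * g l) summable_on UNIV \<and> (\<Sum>\<^sub>\<infinity>l. (if i = l then 1 else 0) * g l) = g i"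
    by simp
  have "(\<lambda>l. g l * (if l = j then 1 else 0)) summable_on UNIV \<longleftrightarrow> (\<lambda>l. g l * (if l = j then 1 else 0)) summable_on {j}"
    by (rule summable_on_cong_neutral) auto
  moreover have "(\<Sum>\<^sub>\<infinity>l. g l * (if l = j then 1 else 0)) = (\<Sum>\<^sub>\<infinity>l\<in>{j}. g l * (if l = j then 1 else 0))"
    by (rule infsum_cong_neutral) auto
  ultimately show "(\<lambda>l. g l * (if l = j then 1 else 0)) summable_on UNIV \<and> (\<Sum>\<^sub>\<infinity>l. g l * (if l = j then 1 else 0)) = g j"
    by simp
qed

lemma shifted_has_sum:
  fixes h :: "'d idx \<Rightarrow> real"
  assumes "h summable_on UNIV"
  shows "((\<lambda>l. h (p - l)) has_sum (\<Sum>\<^sub>\<infinity>k. h k)) UNIV" "((\<lambda>l. h (l - p)) has_sum (\<Sum>\<^sub>\<infinity>k. h k)) UNIV"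
  using has_sum_reindex_bij_betw[OF bij_minus_right[of p], of h] has_sum_reindex_bij_betw[OF bij_minus_left[of p], of h]
    has_sum_infsum[OF assms] by auto

lemma assoc:
  assumes A: "A \<in> Ms B nB \<alpha>0" and C: "C \<in> Ms B nB \<alpha>0" and D: "D \<in> Ms B nB \<alpha>0"
  shows "mmult (mmult A C) D = mmult A (mmult C D)"
proof (intro ext)
  fix i j
  define F where "F p l = A i p * C p l * D l j" for p l
  define Dn where "Dn = snorm nB \<alpha>0 D"
  define Cl where "Cl = (\<Sum>\<^sub>\<infinity>k. nd C k)"
  define G where "G p l = nd A (i - p) * nd C (p - l) * Dn" for p l
  have Cs: "(\<lambda>k. nd C k) summable_on UNIV" using l1[OF C] by blast
  have As: "(\<lambda>k. nd A k) summable_on UNIV" using l1[OF A] by blast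
  have FG: "cmod (F p l) \<le> G p l" for p l
  proof -
    have "cmod (F p l) = cmod (A i p) * cmod (C p l) * cmod (D l j)" unfolding F_def by (simp add: norm_mult)
    also have "\<dots> \<le> nd A (i - p) * nd C (p - l) * Dn"
      using entry_le[OF A, of i p] entry_le[OF C, of p l] entry_le[OF D, of l j]
        nd_le[OF D, of "l - j"] a0pos nd_nonneg[OF A] nd_nonneg[OF C] unfolding Dn_def
      by (intro mult_mono) (auto intro: order_trans)
    finally show ?thesis unfolding G_def .
  qed
  have Ghas: "(G p has_sum (nd A (i - p) * Cl * Dn)) UNIV" for p
    unfolding G_def Cl_def using has_sum_cmult_left[OF has_sum_cmult_right[OF shifted_has_sum(1)[OF Cs, of p]], of "Dn" "nd A (i - p)"]
    by (simp add: mult_ac)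
  have gs: "(\<lambda>p. nd A (i - p) * Cl * Dn) summable_on UNIV"
    using summable_on_cmult_left[OF has_sum_imp_summable[OF shifted_has_sum(1)[OF As, of i]], of "Cl * Dn"]
    by (simp add: mult.assoc)
  have sw: "(\<Sum>\<^sub>\<infinity>p. \<Sum>\<^sub>\<infinity>l. F p l) = (\<Sum>\<^sub>\<infinity>l. \<Sum>\<^sub>\<infinity>p. F p l)"
    by (rule swap_bound(1)[OF FG Ghas gs])
  have "mmult (mmult A C) D i j = (\<Sum>\<^sub>\<infinity>l. \<Sum>\<^sub>\<infinity>p. F p l)"
    unfolding mmult_def F_def by (simp add: infsum_cmult_left')
  also have "\<dots> = (\<Sum>\<^sub>\<infinity>p. \<Sum>\<^sub>\<infinity>l. F p l)" using sw by simp
  also have "\<dots> = mmult A (mmult C D) i j"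
    unfolding mmult_def F_def by (simp add: infsum_cmult_right' mult.assoc)
  finally show "mmult (mmult A C) D i j = mmult A (mmult C D) i j" .
qed

end




lemma K1_ge1:
  assumes t: "0 < t" and S1: "1 \<le> S"
  shows "1 \<le> (1 - 10 powr (-1 / (2 * t))) powr (-t) * sqrt (2 * S)"
proof -
  define \<theta> where "\<theta> = 10 powr (-1 / (2 * t))"
  have th0: "0 < \<theta>" unfolding \<theta>_def by simp
  have th1: "\<theta> < 1" unfolding \<theta>_def by (rule powr_less_one) (use t in auto)
  have "1 powr (-t) \<le> (1 - \<theta>) powr (-t)"
    by (rule powr_mono2') (use t th0 th1 in auto)
  then have T1: "1 \<le> (1 - \<theta>) powr (-t)" by simp
  have "1 \<le> sqrt (2 * S)" using S1 by simp
  then show ?thesis using T1 unfolding \<theta>_def by (metis mult_mono' mult_1_right zero_le_one order_trans)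
qed

locale neu = mctx B nB \<alpha>0 for B :: "'d::finite sq set" and nB and \<alpha>0 +
  fixes s :: real and W :: "'d mat" and C0 :: real
  assumes C0: "C0 = K0 TYPE('d) \<alpha>0 + K1 TYPE('d) \<alpha>0 \<alpha>0"
    and s: "\<alpha>0 \<le> s" and W: "W \<in> Ms B nB s"
    and small: "4 * C0\<^sup>2 * snorm nB \<alpha>0 W \<le> 1 / 2"
begin

definition Q :: "nat \<Rightarrow> 'd mat" where "Q n = ((mmult W) ^^ n) W"

lemma Q_0: "Q 0 = W" and Q_Suc: "Q (Suc n) = mmult W (Q n)"
  unfolding Q_def by simp_all

definition w0 where "w0 = snorm nB \<alpha>0 W"
definition ws where "ws = snorm nB s W"
definition r where "r = C0 * w0"
definition \<epsilon> where "\<epsilon> = K0 TYPE('d) \<alpha>0 * w0"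
definition K1s where "K1s = K1 TYPE('d) \<alpha>0 s"
definition pb where "pb n = w0 * r ^ n" for n
definition Pb where "Pb = w0 / (1 - r)"

lemma spos: "0 < s" using a0pos s by simp

lemma K0_ge4: "4 \<le> K0 TYPE('d) \<alpha>0"
proof -
  have "sqrt (4\<^sup>2) \<le> sqrt (20 * S)" by (rule real_sqrt_le_mono) (use S_ge1 in simp)
  then show ?thesis unfolding K0_eq by simp
qed

lemma K1_ge1': "0 < t \<Longrightarrow> 1 \<le> K1 TYPE('d) \<alpha>0 t"
  unfolding K1_eq by (rule K1_ge1[OF _ S_ge1])

lemma C0_ge4: "4 \<le> C0" using K0_ge4 K1_ge1'[OF a0pos] C0 by simp

lemma w0_nonneg: "0 \<le> w0" unfolding w0_def by (rule snorm_nonneg)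
lemma ws_nonneg: "0 \<le> ws" unfolding ws_def by (rule snorm_nonneg)

lemma w0_small: "8 * C0\<^sup>2 * w0 \<le> 1" using small unfolding w0_def by simp

lemma r_small: "r \<le> 1/32" and r_nonneg: "0 \<le> r"
proof -
  have c: "4 \<le> C0" by (rule C0_ge4)
  have "8 * C0 * r \<le> 1" using w0_small unfolding r_def by (simp add: power2_eq_square mult.assoc)
  moreover have "4 * r \<le> C0 * r" using c w0_nonneg unfolding r_def by (intro mult_right_mono) auto
  ultimately have "32 * r \<le> 1" by linarith
  then show "r \<le> 1/32" by simp
  show "0 \<le> r" unfolding r_def using c w0_nonneg by simp
qed

lemma w0_le: "w0 \<le> 1/128"
proof -
  have c: "4 \<le> C0" by (rule C0_ge4)
  have "16 \<le> C0\<^sup>2" using c power_mono[of 4 C0 2] by simp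
  then have h: "16 * w0 \<le> C0\<^sup>2 * w0" using w0_nonneg by (rule mult_right_mono)
  have "8 * C0\<^sup>2 * w0 = 8 * (C0\<^sup>2 * w0)" by simp
  then show ?thesis using w0_small h by linarith
qed

lemma eps_le_r: "\<epsilon> \<le> r" and eps_nonneg: "0 \<le> \<epsilon>"
proof -
  have "K0 TYPE('d) \<alpha>0 \<le> C0" using C0 K1_ge1'[OF a0pos] by simp
  then show "\<epsilon> \<le> r" unfolding \<epsilon>_def r_def using w0_nonneg by (simp add: mult_right_mono)
  show "0 \<le> \<epsilon>" unfolding \<epsilon>_def using K0_ge4 w0_nonneg by simp
qed

lemma W0: "W \<in> Ms B nB \<alpha>0" using Ms_mono(1)[OF W s] .

lemma Q_Ms: "Q n \<in> Ms B nB s"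
  by (induction n) (auto simp: Q_0 Q_Suc W tame[OF W _ s])

lemma Q_Ms0: "Q n \<in> Ms B nB \<alpha>0" using Ms_mono(1)[OF Q_Ms s] .

lemma p_bound: "snorm nB \<alpha>0 (Q n) \<le> pb n"
proof (induction n)
  case 0 then show ?case by (simp add: Q_0 pb_def w0_def)
next
  case (Suc n)
  have "snorm nB \<alpha>0 (Q (Suc n)) \<le> K0 TYPE('d) \<alpha>0 * w0 * snorm nB \<alpha>0 (Q n) + K1 TYPE('d) \<alpha>0 \<alpha>0 * w0 * snorm nB \<alpha>0 (Q n)"
    using tame[OF W0 Q_Ms0 order_refl, of n] unfolding Q_Suc w0_def by simp
  also have "\<dots> = (K0 TYPE('d) \<alpha>0 + K1 TYPE('d) \<alpha>0 \<alpha>0) * w0 * snorm nB \<alpha>0 (Q n)"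
    by (simp add: algebra_simps)
  also have "\<dots> = r * snorm nB \<alpha>0 (Q n)" unfolding r_def using C0 by simp
  also have "\<dots> \<le> r * pb n" by (rule mult_left_mono[OF Suc r_nonneg])
  also have "\<dots> = pb (Suc n)" unfolding pb_def by simp
  finally show ?case .
qed

lemma q_rec: "snorm nB s (Q (Suc n)) \<le> \<epsilon> * snorm nB s (Q n) + K1s * ws * pb n"
proof -
  have "snorm nB s (Q (Suc n)) \<le> K0 TYPE('d) \<alpha>0 * w0 * snorm nB s (Q n) + K1s * ws * snorm nB \<alpha>0 (Q n)"
    using tame[OF W Q_Ms s, of n] unfolding Q_Suc w0_def ws_def K1s_def by simp
  also have "K1s * ws * snorm nB \<alpha>0 (Q n) \<le> K1s * ws * pb n"
    by (rule mult_left_mono[OF p_bound]) (use K1_ge1'[OF spos] ws_nonneg in \<open>simp add: K1s_def\<close>)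
  finally show ?thesis unfolding \<epsilon>_def by simp
qed

lemma pb_has_sum: "(pb has_sum Pb) UNIV"
proof -
  have "(\<lambda>n. r ^ n) sums (1 / (1 - r))" by (rule geometric_sums) (use r_small r_nonneg in auto)
  then have "((\<lambda>n. r ^ n) has_sum (1 / (1 - r))) UNIV"
    by (rule sums_nonneg_imp_has_sum) (simp add: r_nonneg)
  from has_sum_cmult_right[OF this, of w0] show ?thesis unfolding pb_def Pb_def by simp
qed

lemma pb_nonneg: "0 \<le> pb n" unfolding pb_def using w0_nonneg r_nonneg by simp

lemma Pb_le: "Pb \<le> 1/124"
proof -
  have "Pb \<le> w0 / (31/32)" unfolding Pb_def using r_small w0_nonneg
    by (intro divide_left_mono) auto
  also have "\<dots> \<le> (1/128) / (31/32)" using w0_le by (intro divide_right_mono) auto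
  finally show ?thesis by simp
qed

lemma sum_pb: "(\<Sum>n\<in>F. pb n) \<le> Pb" if "finite F" for F
  using sum_le_infsum_gen[OF has_sum_imp_summable[OF pb_has_sum] pb_nonneg that] pb_has_sum
  by (simp add: infsumI)

definition Qb where "Qb = ws * (1 + K1s * Pb) / (1 - \<epsilon>)"

lemma q_partial: "(\<Sum>n<N. snorm nB s (Q n)) \<le> Qb"
proof (cases N)
  case 0
  have P0: "0 \<le> Pb" by (rule has_sum_nonneg[OF pb_has_sum]) (simp add: pb_nonneg)
  have K: "0 \<le> K1s" using K1_ge1'[OF spos] unfolding K1s_def by simp
  have e: "0 < 1 - \<epsilon>" using eps_le_r r_small by simp
  have "0 \<le> ws * (1 + K1s * Pb)" using ws_nonneg P0 K by simp
  then have "0 \<le> Qb" unfolding Qb_def using e by simp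
  then show ?thesis using 0 by simp
next
  case (Suc M)
  define q where "q n = snorm nB s (Q n)" for n
  have q0: "0 \<le> q n" for n unfolding q_def by (rule snorm_nonneg)
  have "(\<Sum>n<Suc M. q n) = q 0 + (\<Sum>n<M. q (Suc n))" by (rule sum.lessThan_Suc_shift)
  also have "\<dots> \<le> ws + (\<Sum>n<M. \<epsilon> * q n + K1s * ws * pb n)"
  proof (intro add_mono sum_mono)
    show "q 0 \<le> ws" by (simp add: q_def Q_0 ws_def)
    show "q (Suc n) \<le> \<epsilon> * q n + K1s * ws * pb n" for n unfolding q_def by (rule q_rec)
  qed
  also have "\<dots> = ws + \<epsilon> * (\<Sum>n<M. q n) + K1s * ws * (\<Sum>n<M. pb n)"
    by (simp add: sum.distrib sum_distrib_left)
  also have "\<dots> \<le> ws + \<epsilon> * (\<Sum>n<Suc M. q n) + K1s * ws * Pb"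
  proof -
    have "(\<Sum>n<M. q n) \<le> (\<Sum>n<Suc M. q n)" using q0 by simp
    then have a: "\<epsilon> * (\<Sum>n<M. q n) \<le> \<epsilon> * (\<Sum>n<Suc M. q n)" using eps_nonneg by (rule mult_left_mono)
    have b: "K1s * ws * (\<Sum>n<M. pb n) \<le> K1s * ws * Pb"
      by (rule mult_left_mono[OF sum_pb]) (use K1_ge1'[OF spos] ws_nonneg in \<open>auto simp: K1s_def\<close>)
    show ?thesis using a b by simp
  qed
  finally have "(1 - \<epsilon>) * (\<Sum>n<Suc M. q n) \<le> ws * (1 + K1s * Pb)" by (simp add: algebra_simps)
  moreover have "0 < 1 - \<epsilon>" using eps_le_r r_small by simp
  ultimately have "(\<Sum>n<Suc M. q n) \<le> ws * (1 + K1s * Pb) / (1 - \<epsilon>)"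
    by (simp add: field_simps)
  then show ?thesis unfolding Qb_def q_def Suc .
qed

lemma Qb_le: "Qb \<le> 2 * K1s * ws"
proof -
  have K: "1 \<le> K1s" unfolding K1s_def by (rule K1_ge1'[OF spos])
  have e: "\<epsilon> \<le> 1/32" using eps_le_r r_small by simp
  have P: "0 \<le> Pb" "Pb \<le> 1/124" using Pb_le has_sum_nonneg[OF pb_has_sum] pb_nonneg by auto
  have "1 + K1s * Pb \<le> 2 * K1s * (1 - \<epsilon>)"
  proof -
    have "K1s * Pb \<le> K1s * (1/124)" using P K by (intro mult_left_mono) auto
    moreover have "2 * K1s * (31/32) \<le> 2 * K1s * (1 - \<epsilon>)" using e K by (intro mult_left_mono) auto
    ultimately show ?thesis using K by linarith
  qed
  then have "ws * (1 + K1s * Pb) \<le> ws * (2 * K1s * (1 - \<epsilon>))" using ws_nonneg by (rule mult_left_mono)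
  moreover have "0 < 1 - \<epsilon>" using e by simp
  ultimately show ?thesis unfolding Qb_def by (simp add: divide_le_eq algebra_simps)
qed

end



context neu
begin

definition cf :: "nat \<Rightarrow> complex" where "cf n = (-1) ^ Suc n"
definition R :: "'d mat" where "R i j = (\<Sum>\<^sub>\<infinity>n. cf n * Q n i j)"
definition U :: "'d mat" where "U = madd Imat R"

lemma cf_norm: "cmod (cf n) = 1" unfolding cf_def by (simp add: norm_power)

lemma nd_Q_le: "nd (Q n) k \<le> pb n"
  using nd_le[OF Q_Ms0, of n k] a0pos p_bound[of n] by simp

lemma Q_entry: "cmod (Q n i j) \<le> pb n"
  using entry_le[OF Q_Ms0, of n i j] nd_Q_le[of n "i - j"] by simp

lemma pb_summable: "pb summable_on UNIV" using has_sum_imp_summable[OF pb_has_sum] .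

lemma cseries_summable:
  fixes g :: "nat \<Rightarrow> complex"
  assumes "\<And>n. cmod (g n) \<le> pb n"
  shows "g summable_on UNIV"
proof -
  have "(\<lambda>n. norm (g n)) summable_on UNIV"
    by (rule summable_on_comparison_test[OF pb_summable]) (use assms in auto)
  then show ?thesis using summable_on_iff_abs_summable_on_complex by blast
qed

lemma R_summable: "(\<lambda>n. cf n * Q n i j) summable_on UNIV"
  by (rule cseries_summable) (simp add: norm_mult cf_norm Q_entry)

lemma nd_Q_summable: "(\<lambda>n. nd (Q n) k) summable_on UNIV"
  by (rule summable_on_comparison_test[OF pb_summable]) (use nd_Q_le nd_nonneg[OF Q_Ms0] in auto)

lemma diag_R: "diag R k \<in> B \<and> nd R k \<le> (\<Sum>\<^sub>\<infinity>n. nd (Q n) k)"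
proof -
  define f where "f n = (\<lambda>i. cf n * diag (Q n) k i)" for n
  have fB: "f n \<in> B" for n unfolding f_def by (rule scal_in[OF MsD(1)[OF Q_Ms0]])
  have fn: "nB (f n) = nd (Q n) k" for n
    unfolding f_def nd_def using nB_scal[OF MsD(1)[OF Q_Ms0], of "cf n" n k] cf_norm by simp
  have sm: "(\<lambda>n. nB (f n)) summable_on UNIV" unfolding fn by (rule nd_Q_summable)
  have e: "diag R k = (\<lambda>i. \<Sum>\<^sub>\<infinity>n. f n i)" unfolding f_def diag_def R_def by simp
  show ?thesis using G_nat[OF fB sm] unfolding e[symmetric] fn nd_def[symmetric] by simp
qed

lemma R_Ms:
  assumes Qt: "\<And>n. Q n \<in> Ms B nB t" and st: "(\<lambda>n. snorm nB t (Q n)) summable_on UNIV"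
  shows "R \<in> Ms B nB t \<and> snorm nB t R \<le> (\<Sum>\<^sub>\<infinity>n. snorm nB t (Q n))"
proof -
  have "(\<lambda>k. (nd R k)\<^sup>2 * jbr k powr (2 * t)) summable_on UNIV \<and>
         sqrt (\<Sum>\<^sub>\<infinity>k. (nd R k)\<^sup>2 * jbr k powr (2 * t)) \<le> (\<Sum>\<^sub>\<infinity>n. sqrt (\<Sum>\<^sub>\<infinity>k. (nd (Q n) k)\<^sup>2 * jbr k powr (2 * t)))"
  proof (rule minkowski)
    show "0 \<le> nd (Q n) k" for n k by (rule nd_nonneg[OF Q_Ms0])
    show "0 \<le> jbr k powr (2 * t)" for k :: "'d idx" by simp
    show "0 \<le> nd R k" for k unfolding nd_def using diag_R nB_nonneg by blast
    show "(\<lambda>k. (nd (Q n) k)\<^sup>2 * jbr k powr (2 * t)) summable_on UNIV" for n by (rule MsD(2)[OF Qt])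
    show "(\<lambda>n. nd (Q n) k) summable_on UNIV" for k by (rule nd_Q_summable)
    show "(\<lambda>n. sqrt (\<Sum>\<^sub>\<infinity>k. (nd (Q n) k)\<^sup>2 * jbr k powr (2 * t))) summable_on UNIV"
      using st unfolding snorm_def' .
    show "nd R k \<le> (\<Sum>\<^sub>\<infinity>n. nd (Q n) k)" for k using diag_R by blast
  qed
  then show ?thesis unfolding Ms_def snorm_def' using diag_R by (auto simp: nd_def)
qed

lemma sumQ0: "(\<lambda>n. snorm nB \<alpha>0 (Q n)) summable_on UNIV \<and> (\<Sum>\<^sub>\<infinity>n. snorm nB \<alpha>0 (Q n)) \<le> Pb"
proof -
  have sm: "(\<lambda>n. snorm nB \<alpha>0 (Q n)) summable_on UNIV"
    by (rule summable_on_comparison_test[OF pb_summable]) (use p_bound snorm_nonneg in auto)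
  have "(\<Sum>\<^sub>\<infinity>n. snorm nB \<alpha>0 (Q n)) \<le> (\<Sum>\<^sub>\<infinity>n. pb n)"
    by (rule infsum_mono[OF sm pb_summable]) (rule p_bound)
  then show ?thesis using sm pb_has_sum by (simp add: infsumI)
qed

lemma sumQs: "(\<lambda>n. snorm nB s (Q n)) summable_on UNIV \<and> (\<Sum>\<^sub>\<infinity>n. snorm nB s (Q n)) \<le> Qb"
proof -
  have fin: "(\<Sum>n\<in>F. snorm nB s (Q n)) \<le> Qb" if F: "finite F" for F
  proof -
    obtain N where N: "F \<subseteq> {..<N}" using F finite_nat_iff_bounded by blast
    have "(\<Sum>n\<in>F. snorm nB s (Q n)) \<le> (\<Sum>n<N. snorm nB s (Q n))"
      by (rule sum_mono2) (use N snorm_nonneg in auto)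
    also have "\<dots> \<le> Qb" by (rule q_partial)
    finally show ?thesis .
  qed
  have sm: "(\<lambda>n. snorm nB s (Q n)) summable_on UNIV"
  proof (rule nonneg_bdd_above_summable_on)
    show "0 \<le> snorm nB s (Q n)" for n by (rule snorm_nonneg)
    show "bdd_above (sum (\<lambda>n. snorm nB s (Q n)) ` {F. F \<subseteq> UNIV \<and> finite F})"
    proof (rule bdd_aboveI[of _ Qb])
      fix x assume "x \<in> sum (\<lambda>n. snorm nB s (Q n)) ` {F. F \<subseteq> UNIV \<and> finite F}"
      then show "x \<le> Qb"
      proof (rule imageE)
        fix F assume F0: "F \<in> {F. F \<subseteq> UNIV \<and> finite F}" and xF: "x = sum (\<lambda>n. snorm nB s (Q n)) F"
        from F0 have F: "finite F" by simp
        show "x \<le> Qb" unfolding xF by (rule fin[OF F])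
      qed
    qed
  qed
  have "(\<Sum>\<^sub>\<infinity>n. snorm nB s (Q n)) \<le> Qb"
    by (rule infsum_le_finite_sums[OF sm]) (rule fin)
  then show ?thesis using sm by simp
qed

lemma diag_U: "diag U k = (\<lambda>i. diag Imat k i + diag R k i)"
  unfolding U_def madd_def diag_def by simp

lemma U_Ms:
  assumes Rt: "R \<in> Ms B nB t"
  shows "U \<in> Ms B nB t \<and> snorm nB t U \<le> 1 + snorm nB t R"
proof -
  have dUB: "diag U k \<in> B" for k unfolding diag_U by (rule add_in[OF MsD(1)[OF Imat_Ms(1)] MsD(1)[OF Rt]])
  have "(\<lambda>k. (nd U k)\<^sup>2 * jbr k powr (2 * t)) summable_on UNIV \<and>
    sqrt (\<Sum>\<^sub>\<infinity>k. (nd U k)\<^sup>2 * jbr k powr (2 * t)) \<le> sqrt (\<Sum>\<^sub>\<infinity>k. (nd Imat k)\<^sup>2 * jbr k powr (2 * t)) + sqrt (\<Sum>\<^sub>\<infinity>k. (nd R k)\<^sup>2 * jbr k powr (2 * t))"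
  proof (rule triangle)
    show "0 \<le> nd Imat k" for k by (rule nd_nonneg[OF Imat_Ms(1)])
    show "0 \<le> nd R k" for k by (rule nd_nonneg[OF Rt])
    show "0 \<le> nd U k" for k unfolding nd_def by (rule nB_nonneg[OF dUB])
    show "0 \<le> jbr k powr (2 * t)" for k :: "'d idx" by simp
    show "(\<lambda>k. (nd Imat k)\<^sup>2 * jbr k powr (2 * t)) summable_on UNIV" by (rule MsD(2)[OF Imat_Ms(1)])
    show "(\<lambda>k. (nd R k)\<^sup>2 * jbr k powr (2 * t)) summable_on UNIV" by (rule MsD(2)[OF Rt])
    show "nd U k \<le> nd Imat k + nd R k" for k
      unfolding nd_def diag_U by (rule nB_add[OF MsD(1)[OF Imat_Ms(1)] MsD(1)[OF Rt]])
  qed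
  then show ?thesis unfolding Ms_def snorm_def'[symmetric] using dUB Imat_Ms(2)[of t] by (auto simp: nd_def snorm_def')
qed

lemma mdiff_U: "mdiff U Imat = R"
  unfolding U_def madd_def mdiff_def by simp

lemma R_Ms0: "R \<in> Ms B nB \<alpha>0 \<and> snorm nB \<alpha>0 R \<le> Pb"
  using R_Ms[OF Q_Ms0 conjunct1[OF sumQ0]] sumQ0 by linarith

lemma R_Mss: "R \<in> Ms B nB s \<and> snorm nB s R \<le> Qb"
  using R_Ms[OF Q_Ms conjunct1[OF sumQs]] sumQs by linarith

lemma U_facts:
  "U \<in> Ms B nB s" "snorm nB \<alpha>0 U \<le> 2" "snorm nB s U \<le> 1 + 2 * K1s * ws"
  "snorm nB s (mdiff U Imat) \<le> 2 * K1s * ws"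
proof -
  show "U \<in> Ms B nB s" using U_Ms[of s] R_Mss by blast
  show "snorm nB \<alpha>0 U \<le> 2" using U_Ms[of \<alpha>0] R_Ms0 Pb_le by linarith
  show "snorm nB s U \<le> 1 + 2 * K1s * ws" using U_Ms[of s] R_Mss Qb_le by linarith
  show "snorm nB s (mdiff U Imat) \<le> 2 * K1s * ws" unfolding mdiff_U using R_Mss Qb_le by linarith
qed

end



context neu
begin

lemma Q_comm: "mmult (Q n) W = Q (Suc n)"
proof (induction n)
  case 0 then show ?case by (simp add: Q_0 Q_Suc)
next
  case (Suc n)
  have "mmult (Q (Suc n)) W = mmult (mmult W (Q n)) W" by (simp add: Q_Suc)
  also have "\<dots> = mmult W (mmult (Q n) W)" by (rule assoc[OF W0 Q_Ms0 W0])
  also have "\<dots> = Q (Suc (Suc n))" using Suc by (simp add: Q_Suc)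
  finally show ?case .
qed

lemma R_shift: "R i j = - W i j - (\<Sum>\<^sub>\<infinity>n. cf n * Q (Suc n) i j)"
proof -
  have "R i j = cf 0 * Q 0 i j + (\<Sum>\<^sub>\<infinity>n. cf (Suc n) * Q (Suc n) i j)"
    unfolding R_def by (rule infsum_nat_shift[OF R_summable])
  also have "(\<Sum>\<^sub>\<infinity>n. cf (Suc n) * Q (Suc n) i j) = (\<Sum>\<^sub>\<infinity>n. - (cf n * Q (Suc n) i j))"
    by (simp add: cf_def)
  also have "\<dots> = - (\<Sum>\<^sub>\<infinity>n. cf n * Q (Suc n) i j)" by (rule infsum_uminus)
  finally show ?thesis by (simp add: cf_def Q_0)
qed

lemma row_summable:
  assumes X: "X \<in> Ms B nB \<alpha>0" and Y: "\<And>l. cmod (Y l) \<le> M"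
  shows "(\<lambda>l. X i l * Y l) summable_on UNIV"
proof -
  have M0: "0 \<le> M" using Y[of i] norm_ge_zero order_trans by blast
  have s1: "(\<lambda>l. nd X (i - l) * M) summable_on UNIV"
    using summable_on_cmult_left[OF has_sum_imp_summable[OF shifted_has_sum(1)[OF conjunct1[OF l1[OF X]], of i]]] .
  have "(\<lambda>l. norm (X i l * Y l)) summable_on UNIV"
  proof (rule summable_on_comparison_test[OF s1])
    show "norm (X i l * Y l) \<le> nd X (i - l) * M" for l
      unfolding norm_mult by (rule mult_mono[OF entry_le[OF X] Y]) (use nd_nonneg[OF X] in auto)
  qed simp
  then show ?thesis using summable_on_iff_abs_summable_on_complex by blast
qed

lemma col_summable:
  assumes X: "X \<in> Ms B nB \<alpha>0" and Y: "\<And>l. cmod (Y l) \<le> M"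
  shows "(\<lambda>l. Y l * X l j) summable_on UNIV"
proof -
  have M0: "0 \<le> M" using Y[of j] norm_ge_zero order_trans by blast
  have s1: "(\<lambda>l. M * nd X (l - j)) summable_on UNIV"
    using summable_on_cmult_right[OF has_sum_imp_summable[OF shifted_has_sum(2)[OF conjunct1[OF l1[OF X]], of j]]] .
  have "(\<lambda>l. norm (Y l * X l j)) summable_on UNIV"
  proof (rule summable_on_comparison_test[OF s1])
    show "norm (Y l * X l j) \<le> M * nd X (l - j)" for l
      unfolding norm_mult by (rule mult_mono[OF Y entry_le[OF X]]) (use M0 in auto)
  qed simp
  then show ?thesis using summable_on_iff_abs_summable_on_complex by blast
qed

lemma R0: "R \<in> Ms B nB \<alpha>0" using R_Ms0 by blast
lemma U0: "U \<in> Ms B nB \<alpha>0" using U_Ms[OF R0] by blast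

lemma R_bound: "cmod (R l j) \<le> snorm nB \<alpha>0 R"
  using entry_le[OF R0, of l j] nd_le[OF R0, of "l - j"] a0pos by simp
lemma U_bound: "cmod (U l j) \<le> snorm nB \<alpha>0 U"
  using entry_le[OF U0, of l j] nd_le[OF U0, of "l - j"] a0pos by simp

lemma Imat_eq: "Imat i l = (if i = l then 1 else 0)" unfolding Imat_def by simp

lemma pb_has_sum_mult: "((\<lambda>n. c * pb n) has_sum (c * Pb)) UNIV"
  by (rule has_sum_cmult_right[OF pb_has_sum])

lemma left_inv: "mmult (madd Imat W) U = Imat"
proof (intro ext)
  fix i j
  define X where "X = (\<Sum>\<^sub>\<infinity>n. cf n * Q (Suc n) i j)"
  have sU1: "(\<lambda>l. Imat i l * U l j) summable_on UNIV" and eU1: "(\<Sum>\<^sub>\<infinity>l. Imat i l * U l j) = U i j"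
    using single_sum(1)[of i "\<lambda>l. U l j"] unfolding Imat_eq by auto
  have sU2: "(\<lambda>l. W i l * U l j) summable_on UNIV" by (rule row_summable[OF W0 U_bound])
  have sR1: "(\<lambda>l. W i l * Imat l j) summable_on UNIV" and eR1: "(\<Sum>\<^sub>\<infinity>l. W i l * Imat l j) = W i j"
    using single_sum(2)[of "\<lambda>l. W i l" j] unfolding Imat_eq by auto
  have sR2: "(\<lambda>l. W i l * R l j) summable_on UNIV" by (rule row_summable[OF W0 R_bound])
  have swap: "(\<Sum>\<^sub>\<infinity>l. W i l * R l j) = X"
  proof -
    define F where "F l n = W i l * (cf n * Q n l j)" for l n
    have FG: "cmod (F l n) \<le> nd W (i - l) * pb n" for l n
      unfolding F_def norm_mult cf_norm
      using mult_mono[OF entry_le[OF W0, of i l] Q_entry[of n l j]] nd_nonneg[OF W0] by simp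
    have Gh: "((\<lambda>n. nd W (i - l) * pb n) has_sum (nd W (i - l) * Pb)) UNIV" for l
      by (rule pb_has_sum_mult)
    have gs: "(\<lambda>l. nd W (i - l) * Pb) summable_on UNIV"
      using summable_on_cmult_left[OF has_sum_imp_summable[OF shifted_has_sum(1)[OF conjunct1[OF l1[OF W0]], of i]]] .
    have "(\<Sum>\<^sub>\<infinity>l. W i l * R l j) = (\<Sum>\<^sub>\<infinity>l. \<Sum>\<^sub>\<infinity>n. F l n)"
      unfolding F_def R_def by (simp add: infsum_cmult_right')
    also have "\<dots> = (\<Sum>\<^sub>\<infinity>n. \<Sum>\<^sub>\<infinity>l. F l n)" by (rule swap_bound(1)[OF FG Gh gs])
    also have "\<dots> = (\<Sum>\<^sub>\<infinity>n. cf n * (\<Sum>\<^sub>\<infinity>l. W i l * Q n l j))"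
      unfolding F_def by (simp add: infsum_cmult_right'[symmetric] mult_ac)
    also have "\<dots> = X" unfolding X_def by (simp add: Q_Suc mmult_def)
    finally show ?thesis .
  qed
  have "mmult (madd Imat W) U i j = (\<Sum>\<^sub>\<infinity>l. Imat i l * U l j + W i l * U l j)"
    unfolding mmult_def madd_def by (simp add: distrib_right)
  also have "\<dots> = U i j + (\<Sum>\<^sub>\<infinity>l. W i l * U l j)" using infsum_add[OF sU1 sU2] eU1 by simp
  also have "(\<Sum>\<^sub>\<infinity>l. W i l * U l j) = (\<Sum>\<^sub>\<infinity>l. W i l * Imat l j + W i l * R l j)"
    unfolding U_def madd_def by (simp add: distrib_left)
  also have "\<dots> = W i j + X" using infsum_add[OF sR1 sR2] eR1 swap by simp
  also have "U i j = Imat i j + R i j" unfolding U_def madd_def by simp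
  finally show "mmult (madd Imat W) U i j = Imat i j" using R_shift[of i j] unfolding X_def by simp
qed

lemma right_inv: "mmult U (madd Imat W) = Imat"
proof (intro ext)
  fix i j
  define X where "X = (\<Sum>\<^sub>\<infinity>n. cf n * Q (Suc n) i j)"
  have sU1: "(\<lambda>l. U i l * Imat l j) summable_on UNIV" and eU1: "(\<Sum>\<^sub>\<infinity>l. U i l * Imat l j) = U i j"
    using single_sum(2)[of "\<lambda>l. U i l" j] unfolding Imat_eq by auto
  have sU2: "(\<lambda>l. U i l * W l j) summable_on UNIV" by (rule col_summable[OF W0 U_bound])
  have sR1: "(\<lambda>l. Imat i l * W l j) summable_on UNIV" and eR1: "(\<Sum>\<^sub>\<infinity>l. Imat i l * W l j) = W i j"
    using single_sum(1)[of i "\<lambda>l. W l j"] unfolding Imat_eq by auto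
  have sR2: "(\<lambda>l. R i l * W l j) summable_on UNIV" by (rule col_summable[OF W0 R_bound])
  have swap: "(\<Sum>\<^sub>\<infinity>l. R i l * W l j) = X"
  proof -
    define F where "F l n = cf n * Q n i l * W l j" for l n
    have FG: "cmod (F l n) \<le> nd W (l - j) * pb n" for l n
      unfolding F_def norm_mult cf_norm
      using mult_mono[OF Q_entry[of n i l] entry_le[OF W0, of l j]] pb_nonneg by (simp add: mult.commute)
    have Gh: "((\<lambda>n. nd W (l - j) * pb n) has_sum (nd W (l - j) * Pb)) UNIV" for l
      by (rule pb_has_sum_mult)
    have gs: "(\<lambda>l. nd W (l - j) * Pb) summable_on UNIV"
      using summable_on_cmult_left[OF has_sum_imp_summable[OF shifted_has_sum(2)[OF conjunct1[OF l1[OF W0]], of j]]] .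
    have "(\<Sum>\<^sub>\<infinity>l. R i l * W l j) = (\<Sum>\<^sub>\<infinity>l. \<Sum>\<^sub>\<infinity>n. F l n)"
      unfolding F_def R_def by (simp add: infsum_cmult_left')
    also have "\<dots> = (\<Sum>\<^sub>\<infinity>n. \<Sum>\<^sub>\<infinity>l. F l n)" by (rule swap_bound(1)[OF FG Gh gs])
    also have "\<dots> = (\<Sum>\<^sub>\<infinity>n. cf n * (\<Sum>\<^sub>\<infinity>l. Q n i l * W l j))"
      unfolding F_def by (simp add: infsum_cmult_right'[symmetric] mult_ac)
    also have "\<dots> = (\<Sum>\<^sub>\<infinity>n. cf n * mmult (Q n) W i j)" by (simp add: mmult_def)
    also have "\<dots> = X" unfolding X_def Q_comm ..
    finally show ?thesis .
  qed
  have "mmult U (madd Imat W) i j = (\<Sum>\<^sub>\<infinity>l. U i l * Imat l j + U i l * W l j)"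
    unfolding mmult_def madd_def by (simp add: distrib_left)
  also have "\<dots> = U i j + (\<Sum>\<^sub>\<infinity>l. U i l * W l j)" using infsum_add[OF sU1 sU2] eU1 by simp
  also have "(\<Sum>\<^sub>\<infinity>l. U i l * W l j) = (\<Sum>\<^sub>\<infinity>l. Imat i l * W l j + R i l * W l j)"
    unfolding U_def madd_def by (simp add: distrib_right)
  also have "\<dots> = W i j + X" using infsum_add[OF sR1 sR2] eR1 swap by simp
  also have "U i j = Imat i j + R i j" unfolding U_def madd_def by simp
  finally show "mmult U (madd Imat W) i j = Imat i j" using R_shift[of i j] unfolding X_def by simp
qed

end

theorem lemma4p9:
  fixes B :: "'d::finite sq set" and nB :: "'d sq \<Rightarrow> real"
    and \<alpha>0 s C0 :: real and W :: "'d mat"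
  assumes BA: "seq_banach_algebra B nB"
    and a0: "\<alpha>0 > real CARD('d) / 2"
    and C0: "C0 = K0 TYPE('d) \<alpha>0 + K1 TYPE('d) \<alpha>0 \<alpha>0"
    and s: "s \<ge> \<alpha>0"
    and W: "W \<in> Ms B nB s"
    and small: "4 * C0\<^sup>2 * snorm nB \<alpha>0 W \<le> 1 / 2"
  shows "\<exists>U \<in> Ms B nB s.
           mmult (madd Imat W) U = Imat \<and> mmult U (madd Imat W) = Imat \<and>
           (s > \<alpha>0 \<longrightarrow> snorm nB s U \<le> 1 + 2 * K1 TYPE('d) \<alpha>0 s * snorm nB s W) \<and>
           snorm nB \<alpha>0 U \<le> 2 \<and>
           snorm nB s (mdiff U Imat) \<le> 2 * K1 TYPE('d) \<alpha>0 s * snorm nB s W"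
proof -
  interpret N: neu B nB \<alpha>0 s W C0
    by unfold_locales (use BA a0 C0 s W small in auto)
  show ?thesis
  proof (rule bexI[of _ N.U])
    show "N.U \<in> Ms B nB s" by (rule N.U_facts(1))
    show "mmult (madd Imat W) N.U = Imat \<and> mmult N.U (madd Imat W) = Imat \<and>
           (s > \<alpha>0 \<longrightarrow> snorm nB s N.U \<le> 1 + 2 * K1 TYPE('d) \<alpha>0 s * snorm nB s W) \<and>
           snorm nB \<alpha>0 N.U \<le> 2 \<and>
           snorm nB s (mdiff N.U Imat) \<le> 2 * K1 TYPE('d) \<alpha>0 s * snorm nB s W"
      using N.left_inv N.right_inv N.U_facts unfolding N.K1s_def N.ws_def by auto
  qed
qed

end
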